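(* Let $(M,d)$ be a pointed metric space. The space $\mathrm{Lip}_0(M)$ has the LD2P if and only if for every optimal $\mu\in ba(\widetilde M)$ with $\|\mu\|=1$ and every $\gamma\in(0,1)$ there exist $A\subseteq\widetilde M$ with $\mu(A)\ge\gamma$, functions $f,g\in B_{\mathrm{Lip}_0(M)}$, and $u,v\in M$ with $u\ne v$ such that $f(m_{x,y})\ge\gamma$ and $g(m_{x,y})\ge\gamma$ for all $(x,y)\in A$, and for all $x,y\in\pi(A)$, \[\max\{f(x)-f(y),\,g(y)-g(x)\}+\gamma d(u,v)\le d(x,u)+d(y,v).\]
   Context: $M$ has base point $0$; $\mathrm{Lip}_0(M)$ is the real Banach space of Lipschitz $f\colon M\to\mathbb R$ with $f(0)=0$, normed by the best Lipschitz constant, with unit ball $B_{\mathrm{Lip}_0(M)}$. A Banach space $X$ has the LD2P (local diameter 2 property) if every slice $\{x\in B_X: x^*(x)>1-\alpha\}$ ($\|x^*\|=1$, $\alpha>0$) of its unit ball has diameter $2$. $\widetilde M=\{(x,y)\in M\times M:x\ne y\}$, $f(m_{x,y})=(f(x)-f(y))/d(x,y)$, and $\pi(A)=\{x\in M:\exists y,\ (x,y)\in A\text{ or }(y,x)\in A\}$. $ba(\widetilde M)$ is the Banach space of bounded finitely additive signed measures on the power set of $\widetilde M$ with norm $|\mu|(\widetilde M)$. $\Phi f(x,y)=(f(x)-f(y))/d(x,y)$ and $(\Phi^*\mu)(f)=\int_{\widetilde M}\Phi f\,d\mu$. $\mu$ is optimal if positive and $\|\Phi^*\mu\|=\|\mu\|$.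 *)

theory Defs
  imports "HOL-Analysis.Analysis"
begin

text \<open>Pointed metric space: the carrier is the type 'a (class metric_space), base point p.\<close>

definition Mtilde :: "('a \<times> 'a) set" where
  "Mtilde = {(x, y). x \<noteq> y}"

definition molec :: "('a::metric_space \<Rightarrow> real) \<Rightarrow> 'a \<Rightarrow> 'a \<Rightarrow> real" where
  "molec f x y = (f x - f y) / dist x y"

definition proj_pi :: "('a \<times> 'a) set \<Rightarrow> 'a set" where
  "proj_pi A = {x. \<exists>y. (x, y) \<in> A \<or> (y, x) \<in> A}"

definition Lip0 :: "'a::metric_space \<Rightarrow> ('a \<Rightarrow> real) set" where
  "Lip0 p = {f. f p = 0 \<and> (\<exists>C. \<forall>x y. \<bar>f x - f y\<bar> \<le> C * dist x y)}"

definition lipnorm :: "('a::metric_space \<Rightarrow> real) \<Rightarrow> real" where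
  "lipnorm f = Sup ({\<bar>f x - f y\<bar> / dist x y | x y. x \<noteq> y} \<union> {0})"

definition LipBall :: "'a::metric_space \<Rightarrow> ('a \<Rightarrow> real) set" where
  "LipBall p = {f \<in> Lip0 p. lipnorm f \<le> 1}"

definition lip_dual :: "'a::metric_space \<Rightarrow> (('a \<Rightarrow> real) \<Rightarrow> real) \<Rightarrow> bool" where
  "lip_dual p \<phi> \<longleftrightarrow>
     (\<forall>f \<in> Lip0 p. \<forall>g \<in> Lip0 p. \<phi> (\<lambda>x. f x + g x) = \<phi> f + \<phi> g) \<and>
     (\<forall>f \<in> Lip0 p. \<forall>c. \<phi> (\<lambda>x. c * f x) = c * \<phi> f) \<and>
     (\<exists>K. \<forall>f \<in> Lip0 p. \<bar>\<phi> f\<bar> \<le> K * lipnorm f)"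

definition dual_norm :: "'a::metric_space \<Rightarrow> (('a \<Rightarrow> real) \<Rightarrow> real) \<Rightarrow> real" where
  "dual_norm p \<phi> = Sup {\<bar>\<phi> f\<bar> | f. f \<in> LipBall p}"

definition slice :: "'a::metric_space \<Rightarrow> (('a \<Rightarrow> real) \<Rightarrow> real) \<Rightarrow> real \<Rightarrow> ('a \<Rightarrow> real) set" where
  "slice p \<phi> \<alpha> = {f \<in> LipBall p. \<phi> f > 1 - \<alpha>}"

definition LD2P :: "'a::metric_space \<Rightarrow> bool" where
  "LD2P p \<longleftrightarrow>
     (\<forall>\<phi> \<alpha>. lip_dual p \<phi> \<and> dual_norm p \<phi> = 1 \<and> \<alpha> > 0 \<longrightarrow>
        Sup {lipnorm (\<lambda>x. f x - g x) | f g. f \<in> slice p \<phi> \<alpha> \<and> g \<in> slice p \<phi> \<alpha>} = 2)"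

text \<open>ba(Mtilde): bounded finitely additive signed measures on the power set of Mtilde
  (only the values on subsets of Mtilde are relevant).\<close>

definition is_ba :: "(('a \<times> 'a) set \<Rightarrow> real) \<Rightarrow> bool" where
  "is_ba \<mu> \<longleftrightarrow>
     (\<forall>A B. A \<subseteq> Mtilde \<and> B \<subseteq> Mtilde \<and> A \<inter> B = {} \<longrightarrow> \<mu> (A \<union> B) = \<mu> A + \<mu> B) \<and>
     (\<exists>K. \<forall>A. A \<subseteq> Mtilde \<longrightarrow> \<bar>\<mu> A\<bar> \<le> K)"

definition fin_partition :: "('a \<times> 'a) set set \<Rightarrow> bool" where
  "fin_partition P \<longleftrightarrow> finite P \<and> \<Union>P = Mtilde \<and> {} \<notin> P \<and>
     (\<forall>A \<in> P. \<forall>B \<in> P. A \<noteq> B \<longrightarrow> A \<inter> B = {})"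

definition ba_norm :: "(('a \<times> 'a) set \<Rightarrow> real) \<Rightarrow> real" where
  "ba_norm \<mu> = Sup {(\<Sum>A\<in>P. \<bar>\<mu> A\<bar>) | P. fin_partition P}"

definition ba_positive :: "(('a \<times> 'a) set \<Rightarrow> real) \<Rightarrow> bool" where
  "ba_positive \<mu> \<longleftrightarrow> (\<forall>A. A \<subseteq> Mtilde \<longrightarrow> \<mu> A \<ge> 0)"

text \<open>Integral of a bounded function on Mtilde against a positive bounded finitely additive
  measure (supremum of lower sums over finite partitions; this is the standard integral
  for positive mu, which is the only case needed for optimality).\<close>

definition ba_integral :: "(('a \<times> 'a) set \<Rightarrow> real) \<Rightarrow> ('a \<times> 'a \<Rightarrow> real) \<Rightarrow> real" where
  "ba_integral \<mu> h = Sup {(\<Sum>A\<in>P. Inf (h ` A) * \<mu> A) | P. fin_partition P}"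

definition Phi :: "('a::metric_space \<Rightarrow> real) \<Rightarrow> 'a \<times> 'a \<Rightarrow> real" where
  "Phi f = (\<lambda>(x, y). (f x - f y) / dist x y)"

definition Phi_star_norm :: "'a::metric_space \<Rightarrow> (('a \<times> 'a) set \<Rightarrow> real) \<Rightarrow> real" where
  "Phi_star_norm p \<mu> = Sup {\<bar>ba_integral \<mu> (Phi f)\<bar> | f. f \<in> LipBall p}"

definition optimal :: "'a::metric_space \<Rightarrow> (('a \<times> 'a) set \<Rightarrow> real) \<Rightarrow> bool" where
  "optimal p \<mu> \<longleftrightarrow> ba_positive \<mu> \<and> Phi_star_norm p \<mu> = ba_norm \<mu>"

end

theory Submission
  imports Defs
begin


definition lipb :: "('a::metric_space \<Rightarrow> real) \<Rightarrow> bool" where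
  "lipb f \<longleftrightarrow> (\<exists>C. \<forall>x y. \<bar>f x - f y\<bar> \<le> C * dist x y)"

lemma lip_set_bdd:
  assumes "lipb f"
  shows "bdd_above ({\<bar>f x - f y\<bar> / dist x y | x y. x \<noteq> y} \<union> {0})"
proof -
  obtain C where C: "\<forall>x y. \<bar>f x - f y\<bar> \<le> C * dist x y" using assms lipb_def by blast
  have "\<forall>t \<in> ({\<bar>f x - f y\<bar> / dist x y | x y. x \<noteq> y} \<union> {0}). t \<le> max C 0"
  proof
    fix t assume "t \<in> ({\<bar>f x - f y\<bar> / dist x y | x y. x \<noteq> y} \<union> {0})"
    then consider "t = 0" | x y where "x \<noteq> y" "t = \<bar>f x - f y\<bar> / dist x y" by blast
    then show "t \<le> max C 0"
    proof cases
      case 1 then show ?thesis by simp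
    next
      case 2
      have "\<bar>f x - f y\<bar> \<le> C * dist x y" using C by blast
      then have "\<bar>f x - f y\<bar> / dist x y \<le> C" using 2 by (simp add: divide_le_eq mult.commute)
      then show ?thesis using 2 by simp
    qed
  qed
  then show ?thesis by (meson bdd_above_def)
qed

lemma lipnorm_nonneg: assumes "lipb f" shows "0 \<le> lipnorm f"
  unfolding lipnorm_def by (rule cSup_upper2[OF _ order_refl lip_set_bdd[OF assms]]) simp

lemma lipnorm_ratio: "lipb f \<Longrightarrow> x \<noteq> y \<Longrightarrow> \<bar>f x - f y\<bar> / dist x y \<le> lipnorm f"
  unfolding lipnorm_def by (rule cSup_upper[OF _ lip_set_bdd]) auto

lemma lipnorm_diff: "lipb f \<Longrightarrow> \<bar>f x - f y\<bar> \<le> lipnorm f * dist x y"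
proof (cases "x = y")
  case False
  assume "lipb f"
  then have "\<bar>f x - f y\<bar> / dist x y \<le> lipnorm f" using lipnorm_ratio False by blast
  then show ?thesis using False by (simp add: divide_le_eq)
qed simp

lemma lipnorm_le:
  assumes "\<And>x y. \<bar>f x - f y\<bar> \<le> L * dist x y" "0 \<le> L"
  shows "lipnorm f \<le> L"
  unfolding lipnorm_def
proof (rule cSup_least)
  show "{\<bar>f x - f y\<bar> / dist x y |x y. x \<noteq> y} \<union> {0} \<noteq> {}" by simp
  fix t assume "t \<in> {\<bar>f x - f y\<bar> / dist x y |x y. x \<noteq> y} \<union> {0}"
  then consider "t = 0" | x y where "x \<noteq> y" "t = \<bar>f x - f y\<bar> / dist x y" by blast
  then show "t \<le> L"
  proof cases
    case 2
    then show ?thesis using assms(1)[of x y] by (simp add: divide_le_eq mult.commute)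
  qed (use assms in simp)
qed

lemma Lip0_lipb: "f \<in> Lip0 p \<Longrightarrow> lipb f"
  unfolding Lip0_def lipb_def by blast

lemma LipBall_diff: "f \<in> LipBall p \<Longrightarrow> \<bar>f x - f y\<bar> \<le> dist x y"
proof -
  assume f: "f \<in> LipBall p"
  then have "lipb f" "lipnorm f \<le> 1" unfolding LipBall_def using Lip0_lipb by auto
  then have "\<bar>f x - f y\<bar> \<le> lipnorm f * dist x y" using lipnorm_diff by blast
  also have "\<dots> \<le> 1 * dist x y" by (rule mult_right_mono) (use \<open>lipnorm f \<le> 1\<close> in auto)
  finally show ?thesis by simp
qed

lemma LipBall_intro:
  assumes "\<And>x y. \<bar>f x - f y\<bar> \<le> dist x y" "f p = 0"
  shows "f \<in> LipBall p"
proof -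
  have "f \<in> Lip0 p" unfolding Lip0_def using assms by (auto intro!: exI[of _ 1])
  moreover have "lipnorm f \<le> 1" using lipnorm_le[of f 1] assms by simp
  ultimately show ?thesis unfolding LipBall_def by simp
qed

lemma Phi_bound:
  assumes "lipb f" shows "\<bar>Phi f z\<bar> \<le> lipnorm f"
proof -
  obtain x y where z: "z = (x, y)" by fastforce
  show ?thesis
  proof (cases "x = y")
    case True then show ?thesis using z lipnorm_nonneg[OF assms] by (simp add: Phi_def)
  next
    case False
    then show ?thesis using z lipnorm_ratio[OF assms False] by (simp add: Phi_def abs_divide)
  qed
qed



definition pba :: "(('a \<times> 'a) set \<Rightarrow> real) \<Rightarrow> bool" where
  "pba \<mu> \<longleftrightarrow> is_ba \<mu> \<and> ba_positive \<mu>"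

definition bdd_on :: "('a \<times> 'a \<Rightarrow> real) \<Rightarrow> bool" where
  "bdd_on h \<longleftrightarrow> (\<exists>c. \<forall>z\<in>Mtilde. \<bar>h z\<bar> \<le> c)"

definition Lsum :: "(('a \<times> 'a) set \<Rightarrow> real) \<Rightarrow> ('a \<times> 'a \<Rightarrow> real) \<Rightarrow> ('a \<times> 'a) set set \<Rightarrow> real" where
  "Lsum \<mu> h P = (\<Sum>C\<in>P. Inf (h ` C) * \<mu> C)"

definition Usum :: "(('a \<times> 'a) set \<Rightarrow> real) \<Rightarrow> ('a \<times> 'a \<Rightarrow> real) \<Rightarrow> ('a \<times> 'a) set set \<Rightarrow> real" where
  "Usum \<mu> h P = (\<Sum>C\<in>P. Sup (h ` C) * \<mu> C)"

lemma pba_add: "pba \<mu> \<Longrightarrow> A \<subseteq> Mtilde \<Longrightarrow> B \<subseteq> Mtilde \<Longrightarrow> A \<inter> B = {} \<Longrightarrow> \<mu> (A \<union> B) = \<mu> A + \<mu> B"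
  unfolding pba_def is_ba_def by blast

lemma pba_nonneg: "pba \<mu> \<Longrightarrow> A \<subseteq> Mtilde \<Longrightarrow> 0 \<le> \<mu> A"
  unfolding pba_def ba_positive_def by blast

lemma pba_empty: "pba \<mu> \<Longrightarrow> \<mu> {} = 0"
  using pba_add[of \<mu> "{}" "{}"] by simp

lemma pba_diff: "pba \<mu> \<Longrightarrow> A \<subseteq> B \<Longrightarrow> B \<subseteq> Mtilde \<Longrightarrow> \<mu> (B - A) = \<mu> B - \<mu> A"
proof -
  assume a: "pba \<mu>" "A \<subseteq> B" "B \<subseteq> Mtilde"
  have "B = A \<union> (B - A)" using a by blast
  then have "\<mu> B = \<mu> A + \<mu> (B - A)" using pba_add[of \<mu> A "B - A"] a by auto
  then show ?thesis by simp
qed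

lemma pba_mono: "pba \<mu> \<Longrightarrow> A \<subseteq> B \<Longrightarrow> B \<subseteq> Mtilde \<Longrightarrow> \<mu> A \<le> \<mu> B"
  using pba_diff[of \<mu> A B] pba_nonneg[of \<mu> "B - A"] by auto

lemma pba_union_le: "pba \<mu> \<Longrightarrow> A \<subseteq> Mtilde \<Longrightarrow> B \<subseteq> Mtilde \<Longrightarrow> \<mu> (A \<union> B) \<le> \<mu> A + \<mu> B"
proof -
  assume a: "pba \<mu>" "A \<subseteq> Mtilde" "B \<subseteq> Mtilde"
  have "A \<union> B = A \<union> (B - A)" by blast
  then have "\<mu> (A \<union> B) = \<mu> A + \<mu> (B - A)" using pba_add[of \<mu> A "B - A"] a by auto
  moreover have "\<mu> (B - A) \<le> \<mu> B" using pba_mono[of \<mu> "B - A" B] a by auto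
  ultimately show ?thesis by simp
qed

lemma pba_sum_gen:
  assumes "pba \<mu>" "finite P" "\<forall>C\<in>P. C \<subseteq> Mtilde"
    "\<forall>C\<in>P. \<forall>C'\<in>P. C \<noteq> C' \<longrightarrow> C \<inter> C' = {}" "D \<subseteq> Mtilde"
  shows "(\<Sum>C\<in>P. \<mu> (C \<inter> D)) = \<mu> (\<Union>P \<inter> D)"
  using assms(2,3,4)
proof (induction P rule: finite_induct)
  case empty
  then show ?case using pba_empty[OF assms(1)] by simp
next
  case (insert C P)
  have IH: "(\<Sum>C\<in>P. \<mu> (C \<inter> D)) = \<mu> (\<Union>P \<inter> D)"
    by (rule insert.IH) (use insert.prems in auto)
  have d: "C \<inter> C' = {}" if "C' \<in> P" for C'
  proof -
    have "C \<noteq> C'" using insert.hyps(2) that by auto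
    then show ?thesis using insert.prems(2) that by auto
  qed
  have disj: "(C \<inter> D) \<inter> (\<Union>P \<inter> D) = {}" using d by blast
  have eq: "\<Union>(insert C P) \<inter> D = (C \<inter> D) \<union> (\<Union>P \<inter> D)" by blast
  have "\<mu> (\<Union>(insert C P) \<inter> D) = \<mu> (C \<inter> D) + \<mu> (\<Union>P \<inter> D)"
    unfolding eq by (rule pba_add[OF assms(1)]) (use insert assms(5) disj in auto)
  then show ?case using insert IH by simp
qed

lemma part_sub: "fin_partition P \<Longrightarrow> C \<in> P \<Longrightarrow> C \<subseteq> Mtilde"
  unfolding fin_partition_def by blast

lemma part_ne: "fin_partition P \<Longrightarrow> C \<in> P \<Longrightarrow> C \<noteq> {}"
  unfolding fin_partition_def by blast

lemma part_fin: "fin_partition P \<Longrightarrow> finite P"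
  unfolding fin_partition_def by blast

lemma pba_part:
  assumes "pba \<mu>" "fin_partition P" "D \<subseteq> Mtilde"
  shows "(\<Sum>C\<in>P. \<mu> (C \<inter> D)) = \<mu> D"
proof -
  have pw: "\<forall>C\<in>P. \<forall>C'\<in>P. C \<noteq> C' \<longrightarrow> C \<inter> C' = {}"
    using assms(2) unfolding fin_partition_def by blast
  have sb: "\<forall>C\<in>P. C \<subseteq> Mtilde" using part_sub[OF assms(2)] by blast
  have "(\<Sum>C\<in>P. \<mu> (C \<inter> D)) = \<mu> (\<Union>P \<inter> D)"
    by (rule pba_sum_gen[OF assms(1) part_fin[OF assms(2)] sb pw assms(3)])
  also have "\<Union>P = Mtilde" using assms(2) unfolding fin_partition_def by simp
  then have "\<Union>P \<inter> D = D" using assms(3) by (simp add: Int_absorb1)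
  finally show ?thesis .
qed

lemma pba_part_total:
  assumes "pba \<mu>" "fin_partition P"
  shows "(\<Sum>C\<in>P. \<mu> C) = \<mu> Mtilde"
proof -
  have "(\<Sum>C\<in>P. \<mu> C) = (\<Sum>C\<in>P. \<mu> (C \<inter> Mtilde))"
    by (rule sum.cong) (use part_sub[OF assms(2)] in \<open>auto simp: Int_absorb2\<close>)
  then show ?thesis using pba_part[OF assms order_refl] by simp
qed

definition P0 :: "('a \<times> 'a) set set" where "P0 = {Mtilde} - {{}}"

lemma P0_part: "fin_partition P0"
  unfolding fin_partition_def P0_def by auto

lemma ba_norm_pba:
  assumes "pba \<mu>" shows "ba_norm \<mu> = \<mu> Mtilde"
proof -
  have "{(\<Sum>A\<in>P. \<bar>\<mu> A\<bar>) | P. fin_partition P} = {\<mu> Mtilde}"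
  proof -
    have *: "(\<Sum>A\<in>P. \<bar>\<mu> A\<bar>) = \<mu> Mtilde" if "fin_partition P" for P
    proof -
      have "(\<Sum>A\<in>P. \<bar>\<mu> A\<bar>) = (\<Sum>A\<in>P. \<mu> A)"
        by (rule sum.cong) (use pba_nonneg[OF assms] part_sub[OF that] in auto)
      then show ?thesis using pba_part_total[OF assms that] by simp
    qed
    show ?thesis
    proof (intro set_eqI iffI)
      fix t assume "t \<in> {(\<Sum>A\<in>P. \<bar>\<mu> A\<bar>) | P. fin_partition P}"
      then obtain P where "fin_partition P" "t = (\<Sum>A\<in>P. \<bar>\<mu> A\<bar>)" by blast
      then show "t \<in> {\<mu> Mtilde}" using * by simp
    next
      fix t assume "t \<in> {\<mu> Mtilde}"
      then have "t = (\<Sum>A\<in>P0. \<bar>\<mu> A\<bar>)" using *[OF P0_part] by simp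
      then show "t \<in> {(\<Sum>A\<in>P. \<bar>\<mu> A\<bar>) | P. fin_partition P}" using P0_part by blast
    qed
  qed
  then show ?thesis unfolding ba_norm_def by simp
qed

definition classes :: "('a \<times> 'a \<Rightarrow> 'k) \<Rightarrow> ('a \<times> 'a) set set" where
  "classes k = (\<lambda>z. {w \<in> Mtilde. k w = k z}) ` Mtilde"

lemma classes_part:
  assumes "finite (k ` Mtilde)"
  shows "fin_partition (classes k)"
proof -
  have eq: "classes k = (\<lambda>v. {w \<in> Mtilde. k w = v}) ` (k ` Mtilde)"
    unfolding classes_def by (simp add: image_image)
  have "finite (classes k)" unfolding eq using assms by simp
  moreover have "\<Union>(classes k) = Mtilde" unfolding classes_def by blast
  moreover have "{} \<notin> classes k" unfolding classes_def by blast
  moreover have "\<forall>A \<in> classes k. \<forall>B \<in> classes k. A \<noteq> B \<longrightarrow> A \<inter> B = {}"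
    unfolding classes_def by auto
  ultimately show ?thesis unfolding fin_partition_def by blast
qed

lemma classes_same: "C \<in> classes k \<Longrightarrow> w \<in> C \<Longrightarrow> w' \<in> C \<Longrightarrow> k w = k w'"
  unfolding classes_def by auto

lemma bdd_on_imp:
  assumes "bdd_on h" "C \<subseteq> Mtilde"
  shows "bdd_below (h ` C)" "bdd_above (h ` C)"
proof -
  obtain c where c: "\<forall>z\<in>Mtilde. \<bar>h z\<bar> \<le> c" using assms unfolding bdd_on_def by blast
  show "bdd_below (h ` C)"
  proof (rule bdd_belowI2)
    fix z assume "z \<in> C"
    then have "\<bar>h z\<bar> \<le> c" using c assms(2) by auto
    then show "- c \<le> h z" by simp
  qed
  show "bdd_above (h ` C)"
  proof (rule bdd_aboveI2)
    fix z assume "z \<in> C"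
    then have "\<bar>h z\<bar> \<le> c" using c assms(2) by auto
    then show "h z \<le> c" by simp
  qed
qed

lemma inf_le_pt: assumes "bdd_on h" "C \<subseteq> Mtilde" "z \<in> C" shows "Inf (h ` C) \<le> h z"
  by (rule cInf_lower[OF imageI[OF assms(3)] bdd_on_imp(1)[OF assms(1,2)]])

lemma sup_ge_pt: assumes "bdd_on h" "C \<subseteq> Mtilde" "z \<in> C" shows "h z \<le> Sup (h ` C)"
  by (rule cSup_upper[OF imageI[OF assms(3)] bdd_on_imp(2)[OF assms(1,2)]])

lemma inf_ge: fixes h :: "'x \<Rightarrow> real" shows "C \<noteq> {} \<Longrightarrow> (\<And>z. z \<in> C \<Longrightarrow> a \<le> h z) \<Longrightarrow> a \<le> Inf (h ` C)"
  by (rule cInf_greatest) auto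

lemma sup_le: fixes h :: "'x \<Rightarrow> real" shows "C \<noteq> {} \<Longrightarrow> (\<And>z. z \<in> C \<Longrightarrow> h z \<le> b) \<Longrightarrow> Sup (h ` C) \<le> b"
  by (rule cSup_least) auto

lemma Lsum_ge:
  assumes "pba \<mu>" "fin_partition P" "\<And>C z. C \<in> P \<Longrightarrow> z \<in> C \<Longrightarrow> a C \<le> h z"
  shows "(\<Sum>C\<in>P. a C * \<mu> C) \<le> Lsum \<mu> h P"
  unfolding Lsum_def
proof (rule sum_mono)
  fix C assume C: "C \<in> P"
  have "a C \<le> Inf (h ` C)" by (rule inf_ge) (use assms(3) C part_ne[OF assms(2) C] in auto)
  then show "a C * \<mu> C \<le> Inf (h ` C) * \<mu> C"
    by (rule mult_right_mono) (use pba_nonneg[OF assms(1)] part_sub[OF assms(2) C] in auto)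
qed

lemma Usum_le:
  assumes "pba \<mu>" "fin_partition P" "\<And>C z. C \<in> P \<Longrightarrow> z \<in> C \<Longrightarrow> h z \<le> b C"
  shows "Usum \<mu> h P \<le> (\<Sum>C\<in>P. b C * \<mu> C)"
  unfolding Usum_def
proof (rule sum_mono)
  fix C assume C: "C \<in> P"
  have "Sup (h ` C) \<le> b C" by (rule sup_le) (use assms(3) C part_ne[OF assms(2) C] in auto)
  then show "Sup (h ` C) * \<mu> C \<le> b C * \<mu> C"
    by (rule mult_right_mono) (use pba_nonneg[OF assms(1)] part_sub[OF assms(2) C] in auto)
qed

lemma LU:
  assumes "pba \<mu>" "fin_partition P" "fin_partition Q" "bdd_on h"
  shows "Lsum \<mu> h P \<le> Usum \<mu> h Q"
proof -
  have "Lsum \<mu> h P = (\<Sum>C\<in>P. Inf (h ` C) * (\<Sum>D\<in>Q. \<mu> (D \<inter> C)))"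
    unfolding Lsum_def
    by (rule sum.cong) (use pba_part[OF assms(1) assms(3)] part_sub[OF assms(2)] in auto)
  also have "\<dots> = (\<Sum>C\<in>P. \<Sum>D\<in>Q. Inf (h ` C) * \<mu> (D \<inter> C))"
    by (simp add: sum_distrib_left)
  also have "\<dots> \<le> (\<Sum>C\<in>P. \<Sum>D\<in>Q. Sup (h ` D) * \<mu> (D \<inter> C))"
  proof (rule sum_mono, rule sum_mono)
    fix C D assume C: "C \<in> P" and D: "D \<in> Q"
    have CS: "C \<subseteq> Mtilde" and DS: "D \<subseteq> Mtilde"
      using part_sub assms C D by blast+
    show "Inf (h ` C) * \<mu> (D \<inter> C) \<le> Sup (h ` D) * \<mu> (D \<inter> C)"
    proof (cases "D \<inter> C = {}")
      case True then show ?thesis using pba_empty[OF assms(1)] by simp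
    next
      case False
      then obtain z where z: "z \<in> D" "z \<in> C" by blast
      have "Inf (h ` C) \<le> Sup (h ` D)"
        using inf_le_pt[OF assms(4) CS z(2)] sup_ge_pt[OF assms(4) DS z(1)] by linarith
      moreover have "0 \<le> \<mu> (D \<inter> C)" by (rule pba_nonneg[OF assms(1)]) (use DS in blast)
      ultimately show ?thesis by (rule mult_right_mono)
    qed
  qed
  also have "\<dots> = (\<Sum>D\<in>Q. \<Sum>C\<in>P. Sup (h ` D) * \<mu> (C \<inter> D))"
    by (subst sum.swap) (simp add: Int_commute)
  also have "\<dots> = (\<Sum>D\<in>Q. Sup (h ` D) * (\<Sum>C\<in>P. \<mu> (C \<inter> D)))"
    by (simp add: sum_distrib_left)
  also have "\<dots> = Usum \<mu> h Q"
    unfolding Usum_def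
    by (rule sum.cong) (use pba_part[OF assms(1) assms(2)] part_sub[OF assms(3)] in auto)
  finally show ?thesis .
qed

lemma ba_integral_Lsum: "ba_integral \<mu> h = Sup {Lsum \<mu> h P | P. fin_partition P}"
  unfolding ba_integral_def Lsum_def by simp

lemma I_lower:
  assumes "pba \<mu>" "fin_partition P" "bdd_on h"
  shows "Lsum \<mu> h P \<le> ba_integral \<mu> h"
  unfolding ba_integral_Lsum
proof (rule cSup_upper)
  show "Lsum \<mu> h P \<in> {Lsum \<mu> h P |P. fin_partition P}" using assms by blast
  have "\<forall>t \<in> {Lsum \<mu> h P |P. fin_partition P}. t \<le> Usum \<mu> h P0"
    using LU[OF assms(1) _ P0_part assms(3)] by blast
  then show "bdd_above {Lsum \<mu> h P |P. fin_partition P}" by (meson bdd_above_def)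
qed

lemma I_upper:
  assumes "pba \<mu>" "fin_partition Q" "bdd_on h"
  shows "ba_integral \<mu> h \<le> Usum \<mu> h Q"
  unfolding ba_integral_Lsum
  by (rule cSup_least) (use P0_part LU[OF assms(1) _ assms(2) assms(3)] in auto)

lemma osc:
  assumes "bdd_on h" "C \<subseteq> Mtilde" "C \<noteq> {}" "\<And>z w. z \<in> C \<Longrightarrow> w \<in> C \<Longrightarrow> h z \<le> h w + e"
  shows "Sup (h ` C) - Inf (h ` C) \<le> e"
proof -
  have "Sup (h ` C) \<le> Inf (h ` C) + e"
  proof (rule sup_le[OF assms(3)])
    fix z assume z: "z \<in> C"
    have "h z - e \<le> Inf (h ` C)"
    proof (rule inf_ge[OF assms(3)])
      fix w assume "w \<in> C"
      then have "h z \<le> h w + e" using assms(4) z by blast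
      then show "h z - e \<le> h w" by linarith
    qed
    then show "h z \<le> Inf (h ` C) + e" by simp
  qed
  then show ?thesis by simp
qed

lemma floor_close:
  assumes "\<lfloor>a\<rfloor> = \<lfloor>b\<rfloor>" shows "a < b + 1"
proof -
  have "a < of_int \<lfloor>a\<rfloor> + 1" by linarith
  also have "\<dots> = of_int \<lfloor>b\<rfloor> + 1" using assms by simp
  also have "\<dots> \<le> b + 1" by linarith
  finally show ?thesis .
qed

lemma bdd_on_bound:
  assumes "bdd_on h1" "bdd_on h2"
  obtains c where "0 \<le> c" "\<forall>z\<in>Mtilde. \<bar>h1 z\<bar> \<le> c" "\<forall>z\<in>Mtilde. \<bar>h2 z\<bar> \<le> c"
proof -
  obtain c1 where c1: "\<forall>z\<in>Mtilde. \<bar>h1 z\<bar> \<le> c1" using assms unfolding bdd_on_def by blast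
  obtain c2 where c2: "\<forall>z\<in>Mtilde. \<bar>h2 z\<bar> \<le> c2" using assms unfolding bdd_on_def by blast
  show ?thesis
    by (rule that[of "max 0 (max c1 c2)"]) (use c1 c2 in force)+
qed

lemma level:
  assumes "pba \<mu>" "bdd_on h1" "bdd_on h2" "0 < \<epsilon>"
  shows "\<exists>Q. fin_partition Q \<and> Usum \<mu> h1 Q - Lsum \<mu> h1 Q \<le> \<epsilon> \<and> Usum \<mu> h2 Q - Lsum \<mu> h2 Q \<le> \<epsilon>"
proof -
  obtain c where c: "0 \<le> c" "\<forall>z\<in>Mtilde. \<bar>h1 z\<bar> \<le> c" "\<forall>z\<in>Mtilde. \<bar>h2 z\<bar> \<le> c"
    using bdd_on_bound[OF assms(2,3)] by blast
  have mS: "0 \<le> \<mu> Mtilde" using pba_nonneg[OF assms(1)] by simp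
  obtain n :: nat where n: "\<mu> Mtilde / \<epsilon> < real n" using reals_Archimedean2 by blast
  have npos: "0 < real n" using n mS assms(4) by (smt (verit) divide_nonneg_pos)
  define k where "k = (\<lambda>z. (\<lfloor>real n * h1 z\<rfloor>, \<lfloor>real n * h2 z\<rfloor>))"
  have fin: "finite (k ` Mtilde)"
  proof (rule finite_subset)
    show "k ` Mtilde \<subseteq> {\<lfloor>- (real n * c)\<rfloor>..\<lfloor>real n * c\<rfloor>} \<times> {\<lfloor>- (real n * c)\<rfloor>..\<lfloor>real n * c\<rfloor>}"
    proof
      fix v assume "v \<in> k ` Mtilde"
      then obtain z where z: "z \<in> Mtilde" "v = k z" by blast
      have b1: "- (real n * c) \<le> real n * h1 z" "real n * h1 z \<le> real n * c"
      proof -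
        have "\<bar>h1 z\<bar> \<le> c" using c(2) z(1) by blast
        then have "-c \<le> h1 z" "h1 z \<le> c" by auto
        then have "real n * (-c) \<le> real n * h1 z" "real n * h1 z \<le> real n * c"
          by (intro mult_left_mono; simp)+
        then show "- (real n * c) \<le> real n * h1 z" "real n * h1 z \<le> real n * c" by simp_all
      qed
      have b2: "- (real n * c) \<le> real n * h2 z" "real n * h2 z \<le> real n * c"
      proof -
        have "\<bar>h2 z\<bar> \<le> c" using c(3) z(1) by blast
        then have "-c \<le> h2 z" "h2 z \<le> c" by auto
        then have "real n * (-c) \<le> real n * h2 z" "real n * h2 z \<le> real n * c"
          by (intro mult_left_mono; simp)+
        then show "- (real n * c) \<le> real n * h2 z" "real n * h2 z \<le> real n * c" by simp_all
      qed
      show "v \<in> {\<lfloor>- (real n * c)\<rfloor>..\<lfloor>real n * c\<rfloor>} \<times> {\<lfloor>- (real n * c)\<rfloor>..\<lfloor>real n * c\<rfloor>}"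
        using z b1 b2 unfolding k_def by (auto intro: floor_mono)
    qed
  qed simp
  define Q where "Q = classes k"
  have Qp: "fin_partition Q" unfolding Q_def by (rule classes_part[OF fin])
  have close1: "h1 z \<le> h1 w + 1 / real n" and close2: "h2 z \<le> h2 w + 1 / real n"
    if "C \<in> Q" "z \<in> C" "w \<in> C" for C z w
  proof -
    have "k z = k w" using classes_same that unfolding Q_def by metis
    then have "\<lfloor>real n * h1 z\<rfloor> = \<lfloor>real n * h1 w\<rfloor>" "\<lfloor>real n * h2 z\<rfloor> = \<lfloor>real n * h2 w\<rfloor>"
      unfolding k_def by auto
    then have "real n * h1 z < real n * h1 w + 1" "real n * h2 z < real n * h2 w + 1"
      using floor_close by blast+
    then show "h1 z \<le> h1 w + 1 / real n" "h2 z \<le> h2 w + 1 / real n"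
      using npos by (simp_all add: field_simps)
  qed
  have gap: "Usum \<mu> h Q - Lsum \<mu> h Q \<le> \<epsilon>"
    if hb: "bdd_on h" and cl: "\<And>C z w. C \<in> Q \<Longrightarrow> z \<in> C \<Longrightarrow> w \<in> C \<Longrightarrow> h z \<le> h w + 1 / real n"
    for h
  proof -
    have "Usum \<mu> h Q - Lsum \<mu> h Q = (\<Sum>C\<in>Q. (Sup (h ` C) - Inf (h ` C)) * \<mu> C)"
      unfolding Usum_def Lsum_def by (simp add: sum_subtractf left_diff_distrib)
    also have "\<dots> \<le> (\<Sum>C\<in>Q. (1 / real n) * \<mu> C)"
    proof (rule sum_mono)
      fix C assume C: "C \<in> Q"
      have "Sup (h ` C) - Inf (h ` C) \<le> 1 / real n"
        by (rule osc[OF hb part_sub[OF Qp C] part_ne[OF Qp C]]) (use cl C in blast)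
      then show "(Sup (h ` C) - Inf (h ` C)) * \<mu> C \<le> (1 / real n) * \<mu> C"
        by (rule mult_right_mono) (use pba_nonneg[OF assms(1) part_sub[OF Qp C]] in auto)
    qed
    also have "\<dots> = \<mu> Mtilde / real n"
      using pba_part_total[OF assms(1) Qp] by (simp add: sum_divide_distrib[symmetric])
    also have "\<dots> \<le> \<epsilon>" using n npos assms(4) by (simp add: field_simps)
    finally show ?thesis .
  qed
  have g1: "Usum \<mu> h1 Q - Lsum \<mu> h1 Q \<le> \<epsilon>"
  proof (rule gap[OF assms(2)])
    fix C z w assume "C \<in> Q" "z \<in> C" "w \<in> C"
    then show "h1 z \<le> h1 w + 1 / real n" by (rule close1)
  qed
  have g2: "Usum \<mu> h2 Q - Lsum \<mu> h2 Q \<le> \<epsilon>"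
  proof (rule gap[OF assms(3)])
    fix C z w assume "C \<in> Q" "z \<in> C" "w \<in> C"
    then show "h2 z \<le> h2 w + 1 / real n" by (rule close2)
  qed
  show ?thesis using Qp g1 g2 by blast
qed

lemma eq_by_eps:
  fixes x y K :: real
  assumes "0 \<le> K" "\<And>e. 0 < e \<Longrightarrow> \<bar>x - y\<bar> \<le> K * e"
  shows "x = y"
proof (rule ccontr)
  assume "x \<noteq> y"
  then have d: "0 < \<bar>x - y\<bar>" by simp
  define e where "e = \<bar>x - y\<bar> / (2 * (K + 1))"
  have e: "0 < e" unfolding e_def using d assms(1) by simp
  have "K * e < \<bar>x - y\<bar>"
  proof -
    have "K * e = \<bar>x - y\<bar> * (K / (2 * (K + 1)))" unfolding e_def by (simp add: field_simps)
    also have "\<dots> < \<bar>x - y\<bar> * 1"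
      by (rule mult_strict_left_mono) (use d assms(1) in \<open>auto simp: field_simps\<close>)
    finally show ?thesis by simp
  qed
  then show False using assms(2)[OF e] by simp
qed

lemma bdd_on_add: "bdd_on h1 \<Longrightarrow> bdd_on h2 \<Longrightarrow> bdd_on (\<lambda>z. h1 z + h2 z)"
proof -
  assume "bdd_on h1" "bdd_on h2"
  then obtain c where c: "\<forall>z\<in>Mtilde. \<bar>h1 z\<bar> \<le> c" "\<forall>z\<in>Mtilde. \<bar>h2 z\<bar> \<le> c"
    using bdd_on_bound by metis
  have "\<forall>z\<in>Mtilde. \<bar>h1 z + h2 z\<bar> \<le> 2 * c"
    using c by (smt (verit, ccfv_SIG))
  then show ?thesis unfolding bdd_on_def by blast
qed

lemma bdd_on_scale: "bdd_on h \<Longrightarrow> bdd_on (\<lambda>z. a * h z)"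
proof -
  assume "bdd_on h"
  then obtain c where c: "\<forall>z\<in>Mtilde. \<bar>h z\<bar> \<le> c" unfolding bdd_on_def by blast
  have "\<forall>z\<in>Mtilde. \<bar>a * h z\<bar> \<le> \<bar>a\<bar> * c"
    using c by (simp add: abs_mult mult_left_mono)
  then show ?thesis unfolding bdd_on_def by blast
qed

lemma I_add:
  assumes "pba \<mu>" "bdd_on h1" "bdd_on h2"
  shows "ba_integral \<mu> (\<lambda>z. h1 z + h2 z) = ba_integral \<mu> h1 + ba_integral \<mu> h2"
proof (rule eq_by_eps[of 2])
  fix e :: real assume e: "0 < e"
  obtain Q where Q: "fin_partition Q" "Usum \<mu> h1 Q - Lsum \<mu> h1 Q \<le> e" "Usum \<mu> h2 Q - Lsum \<mu> h2 Q \<le> e"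
    using level[OF assms e] by blast
  have hb: "bdd_on (\<lambda>z. h1 z + h2 z)" using bdd_on_add assms by blast
  have L: "Lsum \<mu> h1 Q + Lsum \<mu> h2 Q \<le> Lsum \<mu> (\<lambda>z. h1 z + h2 z) Q"
  proof -
    have "(\<Sum>C\<in>Q. (Inf (h1 ` C) + Inf (h2 ` C)) * \<mu> C) \<le> Lsum \<mu> (\<lambda>z. h1 z + h2 z) Q"
    proof (rule Lsum_ge[OF assms(1) Q(1)])
      fix C z assume "C \<in> Q" "z \<in> C"
      then show "Inf (h1 ` C) + Inf (h2 ` C) \<le> h1 z + h2 z"
        using inf_le_pt[OF assms(2)] inf_le_pt[OF assms(3)] part_sub[OF Q(1)] by (meson add_mono)
    qed
    then show ?thesis unfolding Lsum_def by (simp add: distrib_right sum.distrib)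
  qed
  have U: "Usum \<mu> (\<lambda>z. h1 z + h2 z) Q \<le> Usum \<mu> h1 Q + Usum \<mu> h2 Q"
  proof -
    have "Usum \<mu> (\<lambda>z. h1 z + h2 z) Q \<le> (\<Sum>C\<in>Q. (Sup (h1 ` C) + Sup (h2 ` C)) * \<mu> C)"
    proof (rule Usum_le[OF assms(1) Q(1)])
      fix C z assume "C \<in> Q" "z \<in> C"
      then show "h1 z + h2 z \<le> Sup (h1 ` C) + Sup (h2 ` C)"
        using sup_ge_pt[OF assms(2)] sup_ge_pt[OF assms(3)] part_sub[OF Q(1)] by (meson add_mono)
    qed
    then show ?thesis unfolding Usum_def by (simp add: distrib_right sum.distrib)
  qed
  have "Lsum \<mu> (\<lambda>z. h1 z + h2 z) Q \<le> ba_integral \<mu> (\<lambda>z. h1 z + h2 z)"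
    "ba_integral \<mu> (\<lambda>z. h1 z + h2 z) \<le> Usum \<mu> (\<lambda>z. h1 z + h2 z) Q"
    using I_lower[OF assms(1) Q(1) hb] I_upper[OF assms(1) Q(1) hb] by auto
  moreover have "Lsum \<mu> h1 Q \<le> ba_integral \<mu> h1" "ba_integral \<mu> h1 \<le> Usum \<mu> h1 Q"
    "Lsum \<mu> h2 Q \<le> ba_integral \<mu> h2" "ba_integral \<mu> h2 \<le> Usum \<mu> h2 Q"
    using I_lower[OF assms(1) Q(1)] I_upper[OF assms(1) Q(1)] assms by auto
  ultimately show "\<bar>ba_integral \<mu> (\<lambda>z. h1 z + h2 z) - (ba_integral \<mu> h1 + ba_integral \<mu> h2)\<bar> \<le> 2 * e"
    using L U Q by linarith
qed simp

lemma I_scale: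
  assumes "pba \<mu>" "bdd_on h"
  shows "ba_integral \<mu> (\<lambda>z. a * h z) = a * ba_integral \<mu> h"
proof (rule eq_by_eps[of "\<bar>a\<bar>"])
  fix e :: real assume e: "0 < e"
  obtain Q where Q: "fin_partition Q" "Usum \<mu> h Q - Lsum \<mu> h Q \<le> e"
    using level[OF assms(1,2,2) e] by blast
  have hb: "bdd_on (\<lambda>z. a * h z)" using bdd_on_scale assms by blast
  have I1: "Lsum \<mu> (\<lambda>z. a * h z) Q \<le> ba_integral \<mu> (\<lambda>z. a * h z)"
    "ba_integral \<mu> (\<lambda>z. a * h z) \<le> Usum \<mu> (\<lambda>z. a * h z) Q"
    using I_lower[OF assms(1) Q(1) hb] I_upper[OF assms(1) Q(1) hb] by auto
  have I2: "Lsum \<mu> h Q \<le> ba_integral \<mu> h" "ba_integral \<mu> h \<le> Usum \<mu> h Q"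
    using I_lower[OF assms(1) Q(1) assms(2)] I_upper[OF assms(1) Q(1) assms(2)] by auto
  show "\<bar>ba_integral \<mu> (\<lambda>z. a * h z) - a * ba_integral \<mu> h\<bar> \<le> \<bar>a\<bar> * e"
  proof (cases "0 \<le> a")
    case True
    have L: "a * Lsum \<mu> h Q \<le> Lsum \<mu> (\<lambda>z. a * h z) Q"
    proof -
      have "(\<Sum>C\<in>Q. (a * Inf (h ` C)) * \<mu> C) \<le> Lsum \<mu> (\<lambda>z. a * h z) Q"
        by (rule Lsum_ge[OF assms(1) Q(1)])
           (use inf_le_pt[OF assms(2)] part_sub[OF Q(1)] True in \<open>auto intro: mult_left_mono\<close>)
      then show ?thesis unfolding Lsum_def by (simp add: sum_distrib_left mult.assoc)
    qed
    have U: "Usum \<mu> (\<lambda>z. a * h z) Q \<le> a * Usum \<mu> h Q"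
    proof -
      have "Usum \<mu> (\<lambda>z. a * h z) Q \<le> (\<Sum>C\<in>Q. (a * Sup (h ` C)) * \<mu> C)"
        by (rule Usum_le[OF assms(1) Q(1)])
           (use sup_ge_pt[OF assms(2)] part_sub[OF Q(1)] True in \<open>auto intro: mult_left_mono\<close>)
      then show ?thesis unfolding Usum_def by (simp add: sum_distrib_left mult.assoc)
    qed
    have "a * Lsum \<mu> h Q \<le> a * ba_integral \<mu> h" "a * ba_integral \<mu> h \<le> a * Usum \<mu> h Q"
      using I2 True by (auto intro: mult_left_mono)
    moreover have "a * (Usum \<mu> h Q - Lsum \<mu> h Q) \<le> a * e" using Q(2) True by (rule mult_left_mono)
    ultimately show ?thesis using I1 L U True by (simp add: right_diff_distrib abs_le_iff)
  next
    case False
    have L: "a * Usum \<mu> h Q \<le> Lsum \<mu> (\<lambda>z. a * h z) Q"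
    proof -
      have "(\<Sum>C\<in>Q. (a * Sup (h ` C)) * \<mu> C) \<le> Lsum \<mu> (\<lambda>z. a * h z) Q"
        by (rule Lsum_ge[OF assms(1) Q(1)])
           (use sup_ge_pt[OF assms(2)] part_sub[OF Q(1)] False in \<open>auto intro: mult_left_mono_neg\<close>)
      then show ?thesis unfolding Usum_def Lsum_def by (simp add: sum_distrib_left mult.assoc)
    qed
    have U: "Usum \<mu> (\<lambda>z. a * h z) Q \<le> a * Lsum \<mu> h Q"
    proof -
      have "Usum \<mu> (\<lambda>z. a * h z) Q \<le> (\<Sum>C\<in>Q. (a * Inf (h ` C)) * \<mu> C)"
        by (rule Usum_le[OF assms(1) Q(1)])
           (use inf_le_pt[OF assms(2)] part_sub[OF Q(1)] False in \<open>auto intro: mult_left_mono_neg\<close>)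
      then show ?thesis unfolding Usum_def Lsum_def by (simp add: sum_distrib_left mult.assoc)
    qed
    have "a * Usum \<mu> h Q \<le> a * ba_integral \<mu> h" "a * ba_integral \<mu> h \<le> a * Lsum \<mu> h Q"
      using I2 False by (auto intro: mult_left_mono_neg)
    moreover have "(-a) * (Usum \<mu> h Q - Lsum \<mu> h Q) \<le> (-a) * e" using Q(2) False by (intro mult_left_mono) auto
    then have "a * Lsum \<mu> h Q - a * Usum \<mu> h Q \<le> - (a * e)" by (simp add: algebra_simps)
    moreover have "\<bar>a\<bar> * e = - (a * e)" using False by simp
    ultimately have r1: "ba_integral \<mu> (\<lambda>z. a * h z) - a * ba_integral \<mu> h \<le> \<bar>a\<bar> * e"
      and r2: "- (ba_integral \<mu> (\<lambda>z. a * h z) - a * ba_integral \<mu> h) \<le> \<bar>a\<bar> * e"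
      using I1 L U by linarith+
    show ?thesis unfolding abs_le_iff using r1 r2 by blast
  qed
qed simp

lemma I_bound:
  assumes "pba \<mu>" "\<forall>z\<in>Mtilde. \<bar>h z\<bar> \<le> c"
  shows "\<bar>ba_integral \<mu> h\<bar> \<le> c * \<mu> Mtilde"
proof -
  have hb: "bdd_on h" using assms unfolding bdd_on_def by blast
  have "ba_integral \<mu> h \<le> Usum \<mu> h P0" by (rule I_upper[OF assms(1) P0_part hb])
  also have "\<dots> \<le> (\<Sum>C\<in>P0. c * \<mu> C)"
    by (rule Usum_le[OF assms(1) P0_part]) (use assms(2) part_sub[OF P0_part] in \<open>force simp: abs_le_iff\<close>)
  also have "\<dots> = c * \<mu> Mtilde" using pba_part_total[OF assms(1) P0_part] by (simp add: sum_distrib_left[symmetric])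
  finally have 1: "ba_integral \<mu> h \<le> c * \<mu> Mtilde" .
  have "(\<Sum>C\<in>P0. (-c) * \<mu> C) \<le> Lsum \<mu> h P0"
    by (rule Lsum_ge[OF assms(1) P0_part]) (use assms(2) part_sub[OF P0_part] in \<open>force simp: abs_le_iff\<close>)
  also have "\<dots> \<le> ba_integral \<mu> h" by (rule I_lower[OF assms(1) P0_part hb])
  finally have "(\<Sum>C\<in>P0. (-c) * \<mu> C) \<le> ba_integral \<mu> h" .
  moreover have "(\<Sum>C\<in>P0. (-c) * \<mu> C) = (-c) * (\<Sum>C\<in>P0. \<mu> C)"
    by (rule sum_distrib_left[symmetric])
  then have "(\<Sum>C\<in>P0. (-c) * \<mu> C) = - (c * \<mu> Mtilde)"
    using pba_part_total[OF assms(1) P0_part] by simp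
  ultimately show ?thesis using 1 by linarith
qed



lemma class_cases:
  assumes "C \<in> classes (\<lambda>z. z \<in> D)"
  shows "C \<subseteq> D \<or> C \<inter> D = {}"
  using classes_same[OF assms] by blast

lemma two_sum:
  assumes "pba \<mu>" "D \<subseteq> Mtilde"
  shows "(\<Sum>C\<in>classes (\<lambda>z. z \<in> D). (if C \<subseteq> D then b1 else b2) * \<mu> C)
          = b1 * \<mu> D + b2 * \<mu> (Mtilde - D)"
proof -
  let ?Q = "classes (\<lambda>z. z \<in> D)"
  have Qp: "fin_partition ?Q" by (rule classes_part) simp
  have "(\<Sum>C\<in>?Q. (if C \<subseteq> D then b1 else b2) * \<mu> C)
        = (\<Sum>C\<in>?Q. b1 * \<mu> (C \<inter> D) + b2 * \<mu> (C \<inter> (Mtilde - D)))"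
  proof (rule sum.cong)
    fix C assume C: "C \<in> ?Q"
    have CS: "C \<subseteq> Mtilde" using part_sub[OF Qp C] .
    show "(if C \<subseteq> D then b1 else b2) * \<mu> C = b1 * \<mu> (C \<inter> D) + b2 * \<mu> (C \<inter> (Mtilde - D))"
    proof (cases "C \<subseteq> D")
      case True
      then have "C \<inter> D = C" "C \<inter> (Mtilde - D) = {}" by auto
      then show ?thesis using True pba_empty[OF assms(1)] by simp
    next
      case False
      then have "C \<inter> D = {}" using class_cases[OF C] by blast
      then have "C \<inter> (Mtilde - D) = C" using CS by blast
      then show ?thesis using False \<open>C \<inter> D = {}\<close> pba_empty[OF assms(1)] by simp
    qed
  qed simp
  also have "\<dots> = b1 * (\<Sum>C\<in>?Q. \<mu> (C \<inter> D)) + b2 * (\<Sum>C\<in>?Q. \<mu> (C \<inter> (Mtilde - D)))"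
    by (simp add: sum.distrib sum_distrib_left)
  also have "\<dots> = b1 * \<mu> D + b2 * \<mu> (Mtilde - D)"
    using pba_part[OF assms(1) Qp assms(2)] pba_part[OF assms(1) Qp, of "Mtilde - D"] by simp
  finally show ?thesis .
qed

lemma I_le2:
  assumes "pba \<mu>" "D \<subseteq> Mtilde" "bdd_on h"
    "\<And>z. z \<in> D \<Longrightarrow> h z \<le> b1" "\<And>z. z \<in> Mtilde - D \<Longrightarrow> h z \<le> b2"
  shows "ba_integral \<mu> h \<le> b1 * \<mu> D + b2 * \<mu> (Mtilde - D)"
proof -
  let ?Q = "classes (\<lambda>z. z \<in> D)"
  have Qp: "fin_partition ?Q" by (rule classes_part) simp
  have "ba_integral \<mu> h \<le> Usum \<mu> h ?Q" by (rule I_upper[OF assms(1) Qp assms(3)])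
  also have "\<dots> \<le> (\<Sum>C\<in>?Q. (if C \<subseteq> D then b1 else b2) * \<mu> C)"
  proof (rule Usum_le[OF assms(1) Qp])
    fix C z assume C: "C \<in> ?Q" and z: "z \<in> C"
    show "h z \<le> (if C \<subseteq> D then b1 else b2)"
    proof (cases "C \<subseteq> D")
      case True
      then have "z \<in> D" using z by blast
      then have "h z \<le> b1" by (rule assms(4))
      then show ?thesis using True by simp
    next
      case False
      then have "z \<notin> D" using class_cases[OF C] z by blast
      then have "z \<in> Mtilde - D" using z part_sub[OF Qp C] by blast
      then have "h z \<le> b2" by (rule assms(5))
      then show ?thesis using False by simp
    qed
  qed
  also have "\<dots> = b1 * \<mu> D + b2 * \<mu> (Mtilde - D)" by (rule two_sum[OF assms(1,2)])
  finally show ?thesis .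
qed

lemma I_ge2:
  assumes "pba \<mu>" "D \<subseteq> Mtilde" "bdd_on h"
    "\<And>z. z \<in> D \<Longrightarrow> b1 \<le> h z" "\<And>z. z \<in> Mtilde - D \<Longrightarrow> b2 \<le> h z"
  shows "b1 * \<mu> D + b2 * \<mu> (Mtilde - D) \<le> ba_integral \<mu> h"
proof -
  let ?Q = "classes (\<lambda>z. z \<in> D)"
  have Qp: "fin_partition ?Q" by (rule classes_part) simp
  have "b1 * \<mu> D + b2 * \<mu> (Mtilde - D) = (\<Sum>C\<in>?Q. (if C \<subseteq> D then b1 else b2) * \<mu> C)"
    by (rule two_sum[OF assms(1,2), symmetric])
  also have "\<dots> \<le> Lsum \<mu> h ?Q"
  proof (rule Lsum_ge[OF assms(1) Qp])
    fix C z assume C: "C \<in> ?Q" and z: "z \<in> C"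
    show "(if C \<subseteq> D then b1 else b2) \<le> h z"
    proof (cases "C \<subseteq> D")
      case True
      then have "z \<in> D" using z by blast
      then have "b1 \<le> h z" by (rule assms(4))
      then show ?thesis using True by simp
    next
      case False
      then have "z \<notin> D" using class_cases[OF C] z by blast
      then have "z \<in> Mtilde - D" using z part_sub[OF Qp C] by blast
      then have "b2 \<le> h z" by (rule assms(5))
      then show ?thesis using False by simp
    qed
  qed
  also have "\<dots> \<le> ba_integral \<mu> h" by (rule I_lower[OF assms(1) Qp assms(3)])
  finally show ?thesis .
qed

lemma div_helper: "((a::real) + b - (c + d)) / e = (a - c) / e + (b - d) / e"
  by (metis add_divide_distrib add_diff_add)

lemma Phi_add: "Phi (\<lambda>x. f x + g x) = (\<lambda>z. Phi f z + Phi g z)"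
  by (rule ext) (auto simp: Phi_def div_helper split: prod.split)

lemma Phi_scale: "Phi (\<lambda>x. c * f x) = (\<lambda>z. c * Phi f z)"
  by (rule ext) (auto simp: Phi_def right_diff_distrib split: prod.split)

lemma Phi_molec: "Phi f (x, y) = molec f x y"
  by (simp add: Phi_def molec_def)

lemma bdd_on_Phi: "lipb f \<Longrightarrow> bdd_on (Phi f)"
  unfolding bdd_on_def using Phi_bound by blast

lemma Lip0_add: "f \<in> Lip0 p \<Longrightarrow> g \<in> Lip0 p \<Longrightarrow> (\<lambda>x. f x + g x) \<in> Lip0 p"
proof -
  assume f: "f \<in> Lip0 p" and g: "g \<in> Lip0 p"
  obtain C1 where C1: "\<forall>x y. \<bar>f x - f y\<bar> \<le> C1 * dist x y" using f unfolding Lip0_def by blast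
  obtain C2 where C2: "\<forall>x y. \<bar>g x - g y\<bar> \<le> C2 * dist x y" using g unfolding Lip0_def by blast
  have "\<forall>x y. \<bar>(f x + g x) - (f y + g y)\<bar> \<le> (C1 + C2) * dist x y"
  proof (intro allI)
    fix x y
    have "\<bar>(f x + g x) - (f y + g y)\<bar> \<le> \<bar>f x - f y\<bar> + \<bar>g x - g y\<bar>" by linarith
    also have "\<dots> \<le> C1 * dist x y + C2 * dist x y" using C1 C2 by (meson add_mono)
    finally show "\<bar>(f x + g x) - (f y + g y)\<bar> \<le> (C1 + C2) * dist x y" by (simp add: distrib_right)
  qed
  then show ?thesis using f g unfolding Lip0_def by auto
qed

lemma Lip0_scale: "f \<in> Lip0 p \<Longrightarrow> (\<lambda>x. c * f x) \<in> Lip0 p"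
proof -
  assume f: "f \<in> Lip0 p"
  obtain C1 where C1: "\<forall>x y. \<bar>f x - f y\<bar> \<le> C1 * dist x y" using f unfolding Lip0_def by blast
  have "\<forall>x y. \<bar>c * f x - c * f y\<bar> \<le> (\<bar>c\<bar> * C1) * dist x y"
  proof (intro allI)
    fix x y
    have "\<bar>c * f x - c * f y\<bar> = \<bar>c\<bar> * \<bar>f x - f y\<bar>" by (simp add: abs_mult[symmetric] right_diff_distrib)
    also have "\<dots> \<le> \<bar>c\<bar> * (C1 * dist x y)" using C1 by (simp add: mult_left_mono)
    finally show "\<bar>c * f x - c * f y\<bar> \<le> (\<bar>c\<bar> * C1) * dist x y" by (simp add: mult.assoc)
  qed
  then show ?thesis using f unfolding Lip0_def by auto
qed

lemma LipBall_Lip0: "f \<in> LipBall p \<Longrightarrow> f \<in> Lip0 p"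
  unfolding LipBall_def by blast

lemma zero_LipBall: "(\<lambda>x. 0) \<in> LipBall p"
  by (rule LipBall_intro) auto

lemma neg_LipBall: "f \<in> LipBall p \<Longrightarrow> (\<lambda>x. -1 * f x) \<in> LipBall p"
proof (rule LipBall_intro)
  assume f: "f \<in> LipBall p"
  fix x y
  show "\<bar>-1 * f x - -1 * f y\<bar> \<le> dist x y" using LipBall_diff[OF f, of x y] by simp
next
  assume f: "f \<in> LipBall p"
  then show "-1 * f p = 0" unfolding LipBall_def Lip0_def by simp
qed

lemma slice_nonempty:
  assumes ld: "lip_dual p \<phi>" and dn: "dual_norm p \<phi> = 1" and a: "0 < \<alpha>"
  shows "\<exists>f. f \<in> slice p \<phi> \<alpha>"
proof -
  have ne: "{\<bar>\<phi> f\<bar> | f. f \<in> LipBall p} \<noteq> {}" using zero_LipBall by blast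
  have "1 - \<alpha> < Sup {\<bar>\<phi> f\<bar> | f. f \<in> LipBall p}" using dn a unfolding dual_norm_def by simp
  from less_cSupD[OF ne this] obtain t where "t \<in> {\<bar>\<phi> f\<bar> | f. f \<in> LipBall p}" "1 - \<alpha> < t"
    by blast
  then obtain f where f: "f \<in> LipBall p" "1 - \<alpha> < \<bar>\<phi> f\<bar>" by blast
  show ?thesis
  proof (cases "0 \<le> \<phi> f")
    case True then show ?thesis using f unfolding slice_def by auto
  next
    case False
    have "\<phi> (\<lambda>x. -1 * f x) = -1 * \<phi> f"
      using ld LipBall_Lip0[OF f(1)] unfolding lip_dual_def by blast
    then show ?thesis using f False neg_LipBall[OF f(1)] unfolding slice_def by auto
  qed
qed

lemma lipnorm_big:
  assumes "lipb h" "r < lipnorm h" "0 \<le> r"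
  shows "\<exists>x y. x \<noteq> y \<and> r * dist x y < \<bar>h x - h y\<bar>"
proof -
  let ?R = "{\<bar>h x - h y\<bar> / dist x y | x y. x \<noteq> y} \<union> {0}"
  have ne: "?R \<noteq> {}" by simp
  have "r < Sup ?R" using assms(2) unfolding lipnorm_def .
  from less_cSupD[OF ne this] obtain t where t: "t \<in> ?R" "r < t" by blast
  then have "t \<noteq> 0" using assms(3) by auto
  then obtain x y where "x \<noteq> y" "t = \<bar>h x - h y\<bar> / dist x y" using t by blast
  then show ?thesis using t(2) by (intro exI[of _ x] exI[of _ y]) (simp add: less_divide_eq)
qed

lemma dir1:
  fixes p :: "'a::metric_space" and \<mu> :: "('a \<times> 'a) set \<Rightarrow> real"
  assumes ld: "LD2P p" and ba: "is_ba \<mu>" and opt: "optimal p \<mu>" and n1: "ba_norm \<mu> = 1"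
    and g0: "0 < \<gamma>" and g1: "\<gamma> < 1"
  shows "\<exists>A f g u v. A \<subseteq> Mtilde \<and> \<mu> A \<ge> \<gamma> \<and>
          f \<in> LipBall p \<and> g \<in> LipBall p \<and> u \<noteq> v \<and>
          (\<forall>(x, y) \<in> A. molec f x y \<ge> \<gamma> \<and> molec g x y \<ge> \<gamma>) \<and>
          (\<forall>x \<in> proj_pi A. \<forall>y \<in> proj_pi A.
              max (f x - f y) (g y - g x) + \<gamma> * dist u v \<le> dist x u + dist y v)"
proof -
  have pb: "pba \<mu>" using ba opt unfolding pba_def optimal_def by blast
  have mS: "\<mu> Mtilde = 1" using ba_norm_pba[OF pb] n1 by simp
  define \<phi> where "\<phi> = (\<lambda>f. ba_integral \<mu> (Phi f))"
  have bPhi: "bdd_on (Phi f)" if "f \<in> Lip0 p" for f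
    using bdd_on_Phi Lip0_lipb that by blast
  have ldual: "lip_dual p \<phi>"
    unfolding lip_dual_def
  proof (intro conjI ballI allI)
    fix f g assume f: "f \<in> Lip0 p" and g: "g \<in> Lip0 p"
    show "\<phi> (\<lambda>x. f x + g x) = \<phi> f + \<phi> g"
      unfolding \<phi>_def Phi_add using I_add[OF pb bPhi[OF f] bPhi[OF g]] .
  next
    fix f c assume f: "f \<in> Lip0 p"
    show "\<phi> (\<lambda>x. c * f x) = c * \<phi> f"
      unfolding \<phi>_def Phi_scale using I_scale[OF pb bPhi[OF f]] .
  next
    show "\<exists>K. \<forall>f\<in>Lip0 p. \<bar>\<phi> f\<bar> \<le> K * lipnorm f"
    proof (intro exI[of _ 1] ballI)
      fix f assume f: "f \<in> Lip0 p"
      have "\<forall>z\<in>Mtilde. \<bar>Phi f z\<bar> \<le> lipnorm f" using Phi_bound Lip0_lipb[OF f] by blast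
      then show "\<bar>\<phi> f\<bar> \<le> 1 * lipnorm f" using I_bound[OF pb] mS unfolding \<phi>_def by fastforce
    qed
  qed
  have dn: "dual_norm p \<phi> = 1"
    using opt n1 unfolding optimal_def Phi_star_norm_def dual_norm_def \<phi>_def by simp
  define \<alpha> where "\<alpha> = (1 - \<gamma>)^2 / 2"
  have a0: "0 < \<alpha>" unfolding \<alpha>_def using g1 by simp
  have sup2: "Sup {lipnorm (\<lambda>x. f x - g x) | f g. f \<in> slice p \<phi> \<alpha> \<and> g \<in> slice p \<phi> \<alpha>} = 2"
    using ld ldual dn a0 unfolding LD2P_def by blast
  obtain f0 where f0: "f0 \<in> slice p \<phi> \<alpha>" using slice_nonempty[OF ldual dn a0] by blast
  have ne: "{lipnorm (\<lambda>x. f x - g x) | f g. f \<in> slice p \<phi> \<alpha> \<and> g \<in> slice p \<phi> \<alpha>} \<noteq> {}"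
    using f0 by blast
  have "1 + \<gamma> < Sup {lipnorm (\<lambda>x. f x - g x) | f g. f \<in> slice p \<phi> \<alpha> \<and> g \<in> slice p \<phi> \<alpha>}"
    using sup2 g1 by simp
  from less_cSupD[OF ne this] obtain t where
    "t \<in> {lipnorm (\<lambda>x. f x - g x) | f g. f \<in> slice p \<phi> \<alpha> \<and> g \<in> slice p \<phi> \<alpha>}" "1 + \<gamma> < t"
    by blast
  then obtain f g where fs: "f \<in> slice p \<phi> \<alpha>" and gs: "g \<in> slice p \<phi> \<alpha>"
    and big: "1 + \<gamma> < lipnorm (\<lambda>x. f x - g x)" by blast
  have fB: "f \<in> LipBall p" and gB: "g \<in> LipBall p" and fv: "1 - \<alpha> < \<phi> f" and gv: "1 - \<alpha> < \<phi> g"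
    using fs gs unfolding slice_def by auto
  have lfg: "lipb (\<lambda>x. f x - g x)"
    using Lip0_lipb Lip0_add[OF LipBall_Lip0[OF fB] Lip0_scale[OF LipBall_Lip0[OF gB], of "-1"]] by simp
  obtain x y where xy: "x \<noteq> y" "(1 + \<gamma>) * dist x y < \<bar>(f x - g x) - (f y - g y)\<bar>"
    using lipnorm_big[OF lfg big] g0 by auto
  obtain x1 y1 where xy1: "x1 \<noteq> y1" "(1 + \<gamma>) * dist x1 y1 < (f x1 - f y1) - (g x1 - g y1)"
  proof (cases "(f x - g x) - (f y - g y) \<ge> 0")
    case True
    then show ?thesis using that[of x y] xy by auto
  next
    case False
    then show ?thesis using that[of y x] xy by (auto simp: dist_commute)
  qed
  have fd: "\<And>a b. \<bar>f a - f b\<bar> \<le> dist a b" using LipBall_diff[OF fB] by blast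
  have gd: "\<And>a b. \<bar>g a - g b\<bar> \<le> dist a b" using LipBall_diff[OF gB] by blast
  have af: "\<gamma> * dist x1 y1 < f x1 - f y1" using xy1 gd[of x1 y1] by (simp add: distrib_right abs_le_iff)
  have ag: "\<gamma> * dist x1 y1 < g y1 - g x1" using xy1 fd[of x1 y1] by (simp add: distrib_right abs_le_iff)
  define A where "A = {(a, b) \<in> Mtilde. molec f a b \<ge> \<gamma> \<and> molec g a b \<ge> \<gamma>}"
  have AS: "A \<subseteq> Mtilde" unfolding A_def by auto
  have small: "\<mu> {z \<in> Mtilde. Phi h z < \<gamma>} < (1 - \<gamma>) / 2"
    if hB: "h \<in> LipBall p" and hv: "1 - \<alpha> < \<phi> h" for h
  proof -
    let ?B = "{z \<in> Mtilde. Phi h z < \<gamma>}"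
    have lh: "lipb h" using Lip0_lipb LipBall_Lip0 hB by blast
    have ln: "lipnorm h \<le> 1" using hB unfolding LipBall_def by blast
    have "\<phi> h \<le> \<gamma> * \<mu> ?B + 1 * \<mu> (Mtilde - ?B)"
      unfolding \<phi>_def
    proof (rule I_le2[OF pb _ bdd_on_Phi[OF lh]])
      fix z assume "z \<in> Mtilde - ?B"
      then show "Phi h z \<le> 1" using Phi_bound[OF lh, of z] ln by auto
    qed auto
    moreover have "\<mu> (Mtilde - ?B) = 1 - \<mu> ?B" using pba_diff[OF pb, of ?B Mtilde] mS by auto
    ultimately have "1 - \<alpha> < 1 - (1 - \<gamma>) * \<mu> ?B" using hv by (simp add: algebra_simps)
    then have "(1 - \<gamma>) * \<mu> ?B < (1 - \<gamma>) * ((1 - \<gamma>) / 2)" unfolding \<alpha>_def by (simp add: power2_eq_square)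
    then show ?thesis using g1 by simp
  qed
  let ?Bf = "{z \<in> Mtilde. Phi f z < \<gamma>}" and ?Bg = "{z \<in> Mtilde. Phi g z < \<gamma>}"
  have sub: "Mtilde - A \<subseteq> ?Bf \<union> ?Bg" unfolding A_def by (auto simp: Phi_molec)
  have "\<mu> (Mtilde - A) \<le> \<mu> (?Bf \<union> ?Bg)" by (rule pba_mono[OF pb sub]) auto
  also have "\<dots> \<le> \<mu> ?Bf + \<mu> ?Bg" by (rule pba_union_le[OF pb]) auto
  also have "\<dots> < 1 - \<gamma>" using small[OF fB fv] small[OF gB gv] by simp
  finally have "\<mu> (Mtilde - A) < 1 - \<gamma>" .
  moreover have "\<mu> (Mtilde - A) = 1 - \<mu> A" using pba_diff[OF pb AS] mS by simp
  ultimately have muA: "\<gamma> \<le> \<mu> A" by simp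
  have molA: "\<forall>(a, b) \<in> A. molec f a b \<ge> \<gamma> \<and> molec g a b \<ge> \<gamma>" unfolding A_def by auto
  have ineq: "max (f a - f b) (g b - g a) + \<gamma> * dist y1 x1 \<le> dist a y1 + dist b x1" for a b
  proof -
    have "f a - f b = (f a - f y1) + (f y1 - f x1) + (f x1 - f b)" by simp
    also have "\<dots> \<le> dist a y1 + (f y1 - f x1) + dist x1 b"
      using fd[of a y1] fd[of x1 b] by (simp add: abs_le_iff)
    finally have 1: "f a - f b + \<gamma> * dist y1 x1 \<le> dist a y1 + dist b x1"
      using af by (simp add: dist_commute)
    have "g b - g a = (g b - g x1) + (g x1 - g y1) + (g y1 - g a)" by simp
    also have "\<dots> \<le> dist b x1 + (g x1 - g y1) + dist y1 a"
      using gd[of b x1] gd[of y1 a] by (simp add: abs_le_iff)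
    finally have 2: "g b - g a + \<gamma> * dist y1 x1 \<le> dist a y1 + dist b x1"
      using ag by (simp add: dist_commute)
    show ?thesis using 1 2 by simp
  qed
  show ?thesis
    apply (rule exI[of _ A], rule exI[of _ f], rule exI[of _ g], rule exI[of _ y1], rule exI[of _ x1])
    using AS muA fB gB xy1(1) molA ineq by auto
qed



definition lin_graph :: "(('b \<Rightarrow> real) \<times> real) set \<Rightarrow> bool" where
  "lin_graph G \<longleftrightarrow> (\<forall>h a k b. (h, a) \<in> G \<longrightarrow> (k, b) \<in> G \<longrightarrow> ((\<lambda>z. h z + k z), a + b) \<in> G) \<and>
     (\<forall>h a c. (h, a) \<in> G \<longrightarrow> ((\<lambda>z. c * h z), c * a) \<in> G)"

definition func_graph :: "(('b \<Rightarrow> real) \<times> real) set \<Rightarrow> bool" where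
  "func_graph G \<longleftrightarrow> (\<forall>h a b. (h, a) \<in> G \<longrightarrow> (h, b) \<in> G \<longrightarrow> a = b)"

lemma lin_addD: "lin_graph G \<Longrightarrow> (h, a) \<in> G \<Longrightarrow> (k, b) \<in> G \<Longrightarrow> ((\<lambda>z. h z + k z), a + b) \<in> G"
  unfolding lin_graph_def by blast

lemma lin_scD: "lin_graph G \<Longrightarrow> (h, a) \<in> G \<Longrightarrow> ((\<lambda>z. c * h z), c * a) \<in> G"
  unfolding lin_graph_def by blast

lemma funcD: "func_graph G \<Longrightarrow> (h, a) \<in> G \<Longrightarrow> (h, b) \<in> G \<Longrightarrow> a = b"
  unfolding func_graph_def by blast

lemma lin_zero: "lin_graph G \<Longrightarrow> G \<noteq> {} \<Longrightarrow> ((\<lambda>z. 0), 0) \<in> G"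
proof -
  assume l: "lin_graph G" and ne: "G \<noteq> {}"
  then obtain h a where "(h, a) \<in> G" by auto
  from lin_scD[OF l this, of 0] show ?thesis by simp
qed

locale hb_setup =
  fixes V :: "('b \<Rightarrow> real) set" and q :: "('b \<Rightarrow> real) \<Rightarrow> real"
  assumes Vadd: "\<And>h k. h \<in> V \<Longrightarrow> k \<in> V \<Longrightarrow> (\<lambda>z. h z + k z) \<in> V"
    and Vsc: "\<And>h c. h \<in> V \<Longrightarrow> (\<lambda>z. c * h z) \<in> V"
    and qadd: "\<And>h k. h \<in> V \<Longrightarrow> k \<in> V \<Longrightarrow> q (\<lambda>z. h z + k z) \<le> q h + q k"
    and qsc: "\<And>h c. h \<in> V \<Longrightarrow> 0 < c \<Longrightarrow> q (\<lambda>z. c * h z) = c * q h"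
begin

lemma Vdiff: "h \<in> V \<Longrightarrow> k \<in> V \<Longrightarrow> (\<lambda>z. h z - k z) \<in> V"
  using Vadd[of h "\<lambda>z. (-1) * k z"] Vsc[of k "-1"] by simp

lemma Vlin: "h \<in> V \<Longrightarrow> k \<in> V \<Longrightarrow> (\<lambda>z. h z + t * k z) \<in> V"
  using Vadd[of h "\<lambda>z. t * k z"] Vsc[of k t] by simp

lemma step:
  assumes l: "lin_graph M" and f: "func_graph M" and ne: "M \<noteq> {}" and dom: "fst ` M \<subseteq> V"
    and dm: "\<And>h a. (h, a) \<in> M \<Longrightarrow> a \<le> q h"
    and x0: "x0 \<in> V" "x0 \<notin> fst ` M"
  shows "\<exists>M'. M \<subseteq> M' \<and> lin_graph M' \<and> func_graph M' \<and> fst ` M' \<subseteq> V \<and>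
           (\<forall>(h, a) \<in> M'. a \<le> q h) \<and> x0 \<in> fst ` M'"
proof -
  have zero: "((\<lambda>z. 0), 0) \<in> M" using lin_zero[OF l ne] .
  have inV: "h \<in> V" if "(h, a) \<in> M" for h a using dom that by force
  have key: "a - q (\<lambda>z. y z - x0 z) \<le> q (\<lambda>z. w z + x0 z) - b"
    if ya: "(y, a) \<in> M" and wb: "(w, b) \<in> M" for y a w b
  proof -
    have "((\<lambda>z. y z + w z), a + b) \<in> M" by (rule lin_addD[OF l ya wb])
    then have "a + b \<le> q (\<lambda>z. y z + w z)" by (rule dm)
    also have "(\<lambda>z. y z + w z) = (\<lambda>z. (y z - x0 z) + (w z + x0 z))" by (rule ext) simp
    also have "q \<dots> \<le> q (\<lambda>z. y z - x0 z) + q (\<lambda>z. w z + x0 z)"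
      by (rule qadd) (use Vdiff Vadd inV ya wb x0(1) in auto)
    finally show ?thesis by simp
  qed
  define S where "S = {a - q (\<lambda>z. y z - x0 z) | y a. (y, a) \<in> M}"
  define c where "c = Sup S"
  have Sne: "S \<noteq> {}" unfolding S_def using zero by blast
  have Sbdd: "bdd_above S"
  proof (rule bdd_aboveI)
    fix t assume "t \<in> S"
    then obtain y a where "(y, a) \<in> M" "t = a - q (\<lambda>z. y z - x0 z)" unfolding S_def by blast
    then show "t \<le> q (\<lambda>z. 0 + x0 z) - 0" using key[OF _ zero] by simp
  qed
  have c_ge: "a - q (\<lambda>z. y z - x0 z) \<le> c" if "(y, a) \<in> M" for y a
    unfolding c_def by (rule cSup_upper[OF _ Sbdd]) (use that S_def in blast)
  have c_le: "c \<le> q (\<lambda>z. w z + x0 z) - b" if wb: "(w, b) \<in> M" for w b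
    unfolding c_def
  proof (rule cSup_least[OF Sne])
    fix t assume "t \<in> S"
    then obtain y a where "(y, a) \<in> M" "t = a - q (\<lambda>z. y z - x0 z)" unfolding S_def by blast
    then show "t \<le> q (\<lambda>z. w z + x0 z) - b" using key[OF _ wb] by simp
  qed
  define M' where "M' = {((\<lambda>z. y z + t * x0 z), a + t * c) | y a t. (y, a) \<in> M}"
  have memM': "((\<lambda>z. y z + t * x0 z), a + t * c) \<in> M'" if "(y, a) \<in> M" for y a t
    unfolding M'_def using that by blast
  have sub: "M \<subseteq> M'"
  proof
    fix e assume e: "e \<in> M"
    obtain y a where ya: "e = (y, a)" by fastforce
    have "((\<lambda>z. y z + 0 * x0 z), a + 0 * c) \<in> M'" by (rule memM') (use e ya in simp)
    then show "e \<in> M'" using ya by simp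
  qed
  have lin': "lin_graph M'"
    unfolding lin_graph_def
  proof (intro conjI allI impI)
    fix h a k b assume h: "(h, a) \<in> M'" and k: "(k, b) \<in> M'"
    obtain y1 a1 t1 where 1: "h = (\<lambda>z. y1 z + t1 * x0 z)" "a = a1 + t1 * c" "(y1, a1) \<in> M"
      using h unfolding M'_def by blast
    obtain y2 a2 t2 where 2: "k = (\<lambda>z. y2 z + t2 * x0 z)" "b = a2 + t2 * c" "(y2, a2) \<in> M"
      using k unfolding M'_def by blast
    have "((\<lambda>z. (y1 z + y2 z) + (t1 + t2) * x0 z), (a1 + a2) + (t1 + t2) * c) \<in> M'"
      using memM'[OF lin_addD[OF l 1(3) 2(3)]] by simp
    moreover have "(\<lambda>z. h z + k z) = (\<lambda>z. (y1 z + y2 z) + (t1 + t2) * x0 z)"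
      unfolding 1 2 by (rule ext) (simp add: algebra_simps)
    moreover have "a + b = (a1 + a2) + (t1 + t2) * c" unfolding 1 2 by (simp add: algebra_simps)
    ultimately show "((\<lambda>z. h z + k z), a + b) \<in> M'" by simp
  next
    fix h a s assume h: "(h, a) \<in> M'"
    obtain y1 a1 t1 where 1: "h = (\<lambda>z. y1 z + t1 * x0 z)" "a = a1 + t1 * c" "(y1, a1) \<in> M"
      using h unfolding M'_def by blast
    have "((\<lambda>z. s * y1 z + (s * t1) * x0 z), s * a1 + (s * t1) * c) \<in> M'"
      using memM'[OF lin_scD[OF l 1(3)]] by simp
    moreover have "(\<lambda>z. s * h z) = (\<lambda>z. s * y1 z + (s * t1) * x0 z)"
      unfolding 1 by (rule ext) (simp add: algebra_simps)
    moreover have "s * a = s * a1 + (s * t1) * c" unfolding 1 by (simp add: algebra_simps)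
    ultimately show "((\<lambda>z. s * h z), s * a) \<in> M'" by simp
  qed
  have func': "func_graph M'"
    unfolding func_graph_def
  proof (intro allI impI)
    fix h a b assume h1: "(h, a) \<in> M'" and h2: "(h, b) \<in> M'"
    obtain y1 a1 t1 where 1: "h = (\<lambda>z. y1 z + t1 * x0 z)" "a = a1 + t1 * c" "(y1, a1) \<in> M"
      using h1 unfolding M'_def by blast
    obtain y2 a2 t2 where 2: "h = (\<lambda>z. y2 z + t2 * x0 z)" "b = a2 + t2 * c" "(y2, a2) \<in> M"
      using h2 unfolding M'_def by blast
    have pt: "y1 z + t1 * x0 z = y2 z + t2 * x0 z" for z using 1(1) 2(1) by metis
    have tt: "t1 = t2"
    proof (rule ccontr)
      assume ne: "t1 \<noteq> t2"
      have "((\<lambda>z. (1 / (t2 - t1)) * (y1 z + (-1) * y2 z)), (1 / (t2 - t1)) * (a1 + (-1) * a2)) \<in> M"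
        by (rule lin_scD[OF l lin_addD[OF l 1(3) lin_scD[OF l 2(3)]]])
      moreover have "(\<lambda>z. (1 / (t2 - t1)) * (y1 z + (-1) * y2 z)) = x0"
      proof (rule ext)
        fix z
        have "y1 z - y2 z = (t2 - t1) * x0 z" using pt[of z] by (simp add: algebra_simps)
        then show "(1 / (t2 - t1)) * (y1 z + (-1) * y2 z) = x0 z" using ne by (simp add: field_simps)
      qed
      ultimately have "x0 \<in> fst ` M" by force
      then show False using x0(2) by blast
    qed
    have "y1 = y2" by (rule ext) (use pt tt in simp)
    then have "a1 = a2" using funcD[OF f 1(3)] 2(3) by simp
    then show "a = b" using 1(2) 2(2) tt by simp
  qed
  have dom': "fst ` M' \<subseteq> V"
  proof
    fix h assume "h \<in> fst ` M'"
    then obtain a where "(h, a) \<in> M'" by force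
    then obtain y1 a1 t1 where 1: "h = (\<lambda>z. y1 z + t1 * x0 z)" "(y1, a1) \<in> M"
      unfolding M'_def by blast
    show "h \<in> V" unfolding 1 by (rule Vlin[OF inV[OF 1(2)] x0(1)])
  qed
  have dm': "\<forall>(h, a) \<in> M'. a \<le> q h"
  proof (clarify)
    fix h a assume "(h, a) \<in> M'"
    then obtain y a1 t where 1: "h = (\<lambda>z. y z + t * x0 z)" "a = a1 + t * c" "(y, a1) \<in> M"
      unfolding M'_def by blast
    have yV: "y \<in> V" using inV[OF 1(3)] .
    have hV: "(\<lambda>z. y z + t * x0 z) \<in> V" by (rule Vlin[OF yV x0(1)])
    consider "t = 0" | "0 < t" | "t < 0" by linarith
    then show "a \<le> q h"
    proof cases
      case 1
      then show ?thesis using \<open>h = _\<close> \<open>a = _\<close> dm[OF \<open>(y, a1) \<in> M\<close>] by simp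
    next
      case 2
      have w: "((\<lambda>z. (1 / t) * y z), (1 / t) * a1) \<in> M" by (rule lin_scD[OF l 1(3)])
      have "c \<le> q (\<lambda>z. (1 / t) * y z + x0 z) - (1 / t) * a1" using c_le[OF w] .
      also have "(\<lambda>z. (1 / t) * y z + x0 z) = (\<lambda>z. (1 / t) * (y z + t * x0 z))"
        by (rule ext) (use 2 in \<open>simp add: field_simps\<close>)
      also have "q \<dots> = (1 / t) * q (\<lambda>z. y z + t * x0 z)" by (rule qsc[OF hV]) (use 2 in simp)
      finally have "t * c \<le> t * ((1 / t) * q (\<lambda>z. y z + t * x0 z) - (1 / t) * a1)"
        using 2 by (simp add: mult_left_mono)
      also have "\<dots> = q (\<lambda>z. y z + t * x0 z) - a1" using 2 by (simp add: field_simps)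
      finally show ?thesis using 1 by simp
    next
      case 3
      define s where "s = - t"
      have s: "0 < s" using 3 s_def by simp
      have w: "((\<lambda>z. (1 / s) * y z), (1 / s) * a1) \<in> M" by (rule lin_scD[OF l 1(3)])
      have "(1 / s) * a1 - q (\<lambda>z. (1 / s) * y z - x0 z) \<le> c" using c_ge[OF w] .
      moreover have "(\<lambda>z. (1 / s) * y z - x0 z) = (\<lambda>z. (1 / s) * (y z + t * x0 z))"
        by (rule ext) (use s s_def in \<open>simp add: field_simps\<close>)
      moreover have "q (\<lambda>z. (1 / s) * (y z + t * x0 z)) = (1 / s) * q (\<lambda>z. y z + t * x0 z)"
        by (rule qsc[OF hV]) (use s in simp)
      ultimately have "(1 / s) * a1 - (1 / s) * q (\<lambda>z. y z + t * x0 z) \<le> c" by simp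
      then have "s * ((1 / s) * a1 - (1 / s) * q (\<lambda>z. y z + t * x0 z)) \<le> s * c"
        using s by (simp add: mult_left_mono)
      moreover have "s * ((1 / s) * a1 - (1 / s) * q (\<lambda>z. y z + t * x0 z)) = a1 - q (\<lambda>z. y z + t * x0 z)"
        using s by (simp add: right_diff_distrib)
      ultimately have "a1 - q (\<lambda>z. y z + t * x0 z) \<le> s * c" by simp
      then show ?thesis using 1 s_def by simp
    qed
  qed
  have "x0 \<in> fst ` M'"
  proof -
    have "((\<lambda>z. 0 + 1 * x0 z), 0 + 1 * c) \<in> M'" by (rule memM'[OF zero])
    then have "(x0, c) \<in> M'" by simp
    then show ?thesis by force
  qed
  then show ?thesis using sub lin' func' dom' dm' by blast
qed

lemma HB:
  assumes G0: "lin_graph G0" "func_graph G0" "G0 \<noteq> {}" "fst ` G0 \<subseteq> V"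
    "\<And>h a. (h, a) \<in> G0 \<Longrightarrow> a \<le> q h"
  shows "\<exists>\<psi>. (\<forall>h\<in>V. \<forall>k\<in>V. \<psi> (\<lambda>z. h z + k z) = \<psi> h + \<psi> k) \<and>
             (\<forall>h\<in>V. \<forall>c. \<psi> (\<lambda>z. c * h z) = c * \<psi> h) \<and>
             (\<forall>h\<in>V. \<psi> h \<le> q h) \<and> (\<forall>h a. (h, a) \<in> G0 \<longrightarrow> \<psi> h = a)"
proof -
  define \<A> where "\<A> = {G. G0 \<subseteq> G \<and> lin_graph G \<and> func_graph G \<and> fst ` G \<subseteq> V \<and> (\<forall>(h, a) \<in> G. a \<le> q h)}"
  have G0A: "G0 \<in> \<A>" unfolding \<A>_def using G0 by auto
  have "\<forall>C\<in>chains \<A>. \<exists>U\<in>\<A>. \<forall>X\<in>C. X \<subseteq> U"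
  proof
    fix C assume C: "C \<in> chains \<A>"
    then have CA: "C \<subseteq> \<A>" and ch: "\<And>X Y. X \<in> C \<Longrightarrow> Y \<in> C \<Longrightarrow> X \<subseteq> Y \<or> Y \<subseteq> X"
      unfolding chains_def chain_subset_def by auto
    show "\<exists>U\<in>\<A>. \<forall>X\<in>C. X \<subseteq> U"
    proof (cases "C = {}")
      case True then show ?thesis using G0A by blast
    next
      case False
      then obtain X0 where X0: "X0 \<in> C" by blast
      have mem: "G0 \<subseteq> X \<and> lin_graph X \<and> func_graph X \<and> fst ` X \<subseteq> V \<and> (\<forall>(h, a) \<in> X. a \<le> q h)"
        if "X \<in> C" for X using CA that unfolding \<A>_def by blast
      have "\<Union>C \<in> \<A>"
        unfolding \<A>_def
      proof (intro CollectI conjI)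
        show "G0 \<subseteq> \<Union>C" using mem[OF X0] X0 by blast
        show "lin_graph (\<Union>C)"
          unfolding lin_graph_def
        proof (intro conjI allI impI)
          fix h a k b assume "(h, a) \<in> \<Union>C" "(k, b) \<in> \<Union>C"
          then obtain X Y where X: "X \<in> C" "(h, a) \<in> X" and Y: "Y \<in> C" "(k, b) \<in> Y" by blast
          show "((\<lambda>z. h z + k z), a + b) \<in> \<Union>C"
          proof (cases "X \<subseteq> Y")
            case True
            then have "((\<lambda>z. h z + k z), a + b) \<in> Y" using lin_addD mem[OF Y(1)] X(2) Y(2) by blast
            then show ?thesis using Y(1) by blast
          next
            case False
            then have "Y \<subseteq> X" using ch[OF X(1) Y(1)] by blast
            then have "((\<lambda>z. h z + k z), a + b) \<in> X" using lin_addD mem[OF X(1)] X(2) Y(2) by blast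
            then show ?thesis using X(1) by blast
          qed
        next
          fix h a c assume "(h, a) \<in> \<Union>C"
          then obtain X where X: "X \<in> C" "(h, a) \<in> X" by blast
          then have "((\<lambda>z. c * h z), c * a) \<in> X" using lin_scD mem[OF X(1)] by blast
          then show "((\<lambda>z. c * h z), c * a) \<in> \<Union>C" using X(1) by blast
        qed
        show "func_graph (\<Union>C)"
          unfolding func_graph_def
        proof (intro allI impI)
          fix h a b assume "(h, a) \<in> \<Union>C" "(h, b) \<in> \<Union>C"
          then obtain X Y where X: "X \<in> C" "(h, a) \<in> X" and Y: "Y \<in> C" "(h, b) \<in> Y" by blast
          show "a = b"
          proof (cases "X \<subseteq> Y")
            case True
            then show ?thesis using funcD mem[OF Y(1)] X(2) Y(2) by blast
          next
            case False
            then have "Y \<subseteq> X" using ch[OF X(1) Y(1)] by blast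
            then show ?thesis using funcD mem[OF X(1)] X(2) Y(2) by blast
          qed
        qed
        show "fst ` \<Union>C \<subseteq> V" using mem by blast
        show "\<forall>(h, a) \<in> \<Union>C. a \<le> q h" using mem by blast
      qed
      then show ?thesis by blast
    qed
  qed
  from Zorn_Lemma2[OF this] obtain M where MA: "M \<in> \<A>" and Mmax: "\<forall>X\<in>\<A>. M \<subseteq> X \<longrightarrow> X = M"
    by blast
  have G0M: "G0 \<subseteq> M" and lM: "lin_graph M" and fM: "func_graph M" and dM: "fst ` M \<subseteq> V"
    and qM: "\<forall>(h, a) \<in> M. a \<le> q h" using MA unfolding \<A>_def by auto
  have Mne: "M \<noteq> {}" using G0M G0(3) by blast
  have full: "h \<in> fst ` M" if hV: "h \<in> V" for h
  proof (rule ccontr)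
    assume nh: "h \<notin> fst ` M"
    obtain M' where M': "M \<subseteq> M'" "lin_graph M'" "func_graph M'" "fst ` M' \<subseteq> V"
      "\<forall>(h, a) \<in> M'. a \<le> q h" "h \<in> fst ` M'"
      using step[OF lM fM Mne dM _ hV nh] qM by blast
    have "M' \<in> \<A>" unfolding \<A>_def using M' G0M by blast
    then have "M' = M" using Mmax M'(1) by blast
    then show False using M'(6) nh by blast
  qed
  define \<psi> where "\<psi> = (\<lambda>h. THE a. (h, a) \<in> M)"
  have psiM: "(h, \<psi> h) \<in> M" if hV: "h \<in> V" for h
  proof -
    obtain a where a: "(h, a) \<in> M" using full[OF hV] by force
    have "\<exists>!a. (h, a) \<in> M" using a funcD[OF fM a] by blast
    then have "(h, THE a. (h, a) \<in> M) \<in> M" by (rule theI')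
    then show ?thesis unfolding \<psi>_def .
  qed
  have psi_eq: "\<psi> h = a" if "(h, a) \<in> M" for h a
  proof -
    have "h \<in> V" using dM that by force
    then show ?thesis using psiM funcD[OF fM] that by blast
  qed
  show ?thesis
  proof (intro exI[of _ \<psi>] conjI ballI allI impI)
    fix h k assume "h \<in> V" "k \<in> V"
    then show "\<psi> (\<lambda>z. h z + k z) = \<psi> h + \<psi> k"
      using psi_eq lin_addD[OF lM psiM psiM] by blast
  next
    fix h c assume "h \<in> V"
    then show "\<psi> (\<lambda>z. c * h z) = c * \<psi> h"
      using psi_eq lin_scD[OF lM psiM] by blast
  next
    fix h assume "h \<in> V"
    then show "\<psi> h \<le> q h" using psiM qM by blast
  next
    fix h a assume "(h, a) \<in> G0"
    then show "\<psi> h = a" using psi_eq G0M by blast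
  qed
qed

end



definition ind :: "('a \<times> 'a) set \<Rightarrow> 'a \<times> 'a \<Rightarrow> real" where
  "ind A = (\<lambda>z. if z \<in> A then 1 else 0)"

lemma bdd_on_ind: "bdd_on (ind A)"
  unfolding bdd_on_def ind_def by (intro exI[of _ 1]) auto

lemma Mtilde_iff [simp]: "(x, y) \<in> Mtilde \<longleftrightarrow> x \<noteq> y"
  unfolding Mtilde_def by simp

lemma Phi_inj:
  assumes "f p = 0" "g p = 0" "Phi f = Phi g"
  shows "f = g"
proof (rule ext)
  fix x show "f x = g x"
  proof (cases "x = p")
    case True then show ?thesis using assms by simp
  next
    case False
    have "Phi f (x, p) = Phi g (x, p)" using assms(3) by simp
    then have "(f x - f p) / dist x p = (g x - g p) / dist x p" by (simp add: Phi_def)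
    then show ?thesis using assms(1,2) False by simp
  qed
qed

lemma lip1_min:
  fixes F G :: "'a::metric_space \<Rightarrow> real"
  assumes "\<And>x y. \<bar>F x - F y\<bar> \<le> dist x y" "\<And>x y. \<bar>G x - G y\<bar> \<le> dist x y"
  shows "\<bar>min (F x) (G x) - min (F y) (G y)\<bar> \<le> dist x y"
  using assms(1)[of x y] assms(2)[of x y] by (auto simp: min_def abs_le_iff)

lemma lip1_max:
  fixes F G :: "'a::metric_space \<Rightarrow> real"
  assumes "\<And>x y. \<bar>F x - F y\<bar> \<le> dist x y" "\<And>x y. \<bar>G x - G y\<bar> \<le> dist x y"
  shows "\<bar>max (F x) (G x) - max (F y) (G y)\<bar> \<le> dist x y"
  using assms(1)[of x y] assms(2)[of x y] by (auto simp: max_def abs_le_iff)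

lemma lip1_pd: "\<bar>(c + dist x w) - (c + dist y w)\<bar> \<le> dist x y"
  using abs_dist_diff_le[of x w y] by (simp add: dist_commute)

lemma lip1_md: "\<bar>(c - dist x w) - (c - dist y w)\<bar> \<le> dist x y"
  using abs_dist_diff_le[of x w y] by (simp add: dist_commute abs_minus_commute)

lemma ext_lemma:
  fixes f :: "'a::metric_space \<Rightarrow> real"
  assumes f1: "\<And>x y. \<bar>f x - f y\<bar> \<le> dist x y" and Ene: "E \<noteq> {}"
    and cond: "\<And>x y. x \<in> E \<Longrightarrow> y \<in> E \<Longrightarrow> f x - f y + \<gamma> * dist u v \<le> dist x u + dist y v"
    and g0: "0 \<le> \<gamma>" and g1: "\<gamma> \<le> 1"
  shows "\<exists>H. (\<forall>x y. \<bar>H x - H y\<bar> \<le> dist x y) \<and> (\<forall>x\<in>E. H x = f x) \<and> \<gamma> * dist u v \<le> H v - H u"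
proof -
  obtain e0 where e0: "e0 \<in> E" using Ene by blast
  have tri: "dist x z \<le> dist x y + dist y z" for x y z :: 'a by (rule dist_triangle)
  have fd: "f x - f y \<le> dist x y" for x y using f1[of x y] by (simp add: abs_le_iff)
  define SA where "SA = {f x - dist x u | x. x \<in> E}"
  define SB where "SB = {f y + dist y v | y. y \<in> E}"
  define a where "a = Sup SA"
  define Ib where "Ib = Inf SB"
  have SAne: "SA \<noteq> {}" unfolding SA_def using e0 by blast
  have SBne: "SB \<noteq> {}" unfolding SB_def using e0 by blast
  have bddA: "bdd_above SA"
  proof (rule bdd_aboveI)
    fix t assume "t \<in> SA"
    then obtain x where x: "x \<in> E" "t = f x - dist x u" unfolding SA_def by blast
    have "f x - f e0 \<le> dist x e0" by (rule fd)
    moreover have "dist x e0 \<le> dist x u + dist u e0" by (rule tri)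
    ultimately show "t \<le> f e0 + dist e0 u" using x by (simp add: dist_commute)
  qed
  have bddB: "bdd_below SB"
  proof (rule bdd_belowI)
    fix t assume "t \<in> SB"
    then obtain y where y: "y \<in> E" "t = f y + dist y v" unfolding SB_def by blast
    have "f e0 - f y \<le> dist e0 y" by (rule fd)
    moreover have "dist e0 y \<le> dist e0 v + dist v y" by (rule tri)
    ultimately show "f e0 - dist e0 v \<le> t" using y by (simp add: dist_commute)
  qed
  have a_ge: "f x - dist x u \<le> a" if "x \<in> E" for x
    unfolding a_def by (rule cSup_upper[OF _ bddA]) (use that SA_def in blast)
  have a_le: "a \<le> f x + dist x u" if x: "x \<in> E" for x
    unfolding a_def
  proof (rule cSup_least[OF SAne])
    fix t assume "t \<in> SA"
    then obtain x' where x': "x' \<in> E" "t = f x' - dist x' u" unfolding SA_def by blast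
    have "f x' - f x \<le> dist x' x" by (rule fd)
    moreover have "dist x' x \<le> dist x' u + dist u x" by (rule tri)
    ultimately show "t \<le> f x + dist x u" using x' by (simp add: dist_commute)
  qed
  have Ib_le: "Ib \<le> f y + dist y v" if "y \<in> E" for y
    unfolding Ib_def by (rule cInf_lower[OF _ bddB]) (use that SB_def in blast)
  have Ib_ge: "f y - dist y v \<le> Ib" if y: "y \<in> E" for y
    unfolding Ib_def
  proof (rule cInf_greatest[OF SBne])
    fix t assume "t \<in> SB"
    then obtain y' where y': "y' \<in> E" "t = f y' + dist y' v" unfolding SB_def by blast
    have "f y - f y' \<le> dist y y'" by (rule fd)
    moreover have "dist y y' \<le> dist y v + dist v y'" by (rule tri)
    ultimately show "f y - dist y v \<le> t" using y' by (simp add: dist_commute)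
  qed
  have aIb: "a + \<gamma> * dist u v \<le> Ib"
    unfolding Ib_def
  proof (rule cInf_greatest[OF SBne])
    fix t assume "t \<in> SB"
    then obtain y where y: "y \<in> E" "t = f y + dist y v" unfolding SB_def by blast
    have "a \<le> f y + dist y v - \<gamma> * dist u v"
      unfolding a_def
    proof (rule cSup_least[OF SAne])
      fix s assume "s \<in> SA"
      then obtain x where x: "x \<in> E" "s = f x - dist x u" unfolding SA_def by blast
      show "s \<le> f y + dist y v - \<gamma> * dist u v" using cond[OF x(1) y(1)] x(2) by simp
    qed
    then show "a + \<gamma> * dist u v \<le> t" using y by simp
  qed
  define b where "b = min Ib (a + dist u v)"
  have gd: "\<gamma> * dist u v \<le> 1 * dist u v" using g1 by (intro mult_right_mono) auto
  then have gd: "\<gamma> * dist u v \<le> dist u v" by simp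
  have gd0: "0 \<le> \<gamma> * dist u v" using g0 by simp
  have ba1: "\<gamma> * dist u v \<le> b - a" unfolding b_def using aIb gd by simp
  have ba2: "b - a \<le> dist u v" unfolding b_def by simp
  have fy1: "f y \<le> b + dist y v" if y: "y \<in> E" for y
  proof -
    have "f y - dist y v \<le> Ib" by (rule Ib_ge[OF y])
    moreover have "f y - dist y u \<le> a" by (rule a_ge[OF y])
    moreover have "dist y u \<le> dist y v + dist v u" by (rule tri)
    ultimately show ?thesis unfolding b_def by (simp add: dist_commute)
  qed
  have fy2: "b - dist y v \<le> f y" if y: "y \<in> E" for y
    using Ib_le[OF y] unfolding b_def by simp
  define H where "H = (\<lambda>z. max (max (min (min (f z) (a + dist z u)) (b + dist z v)) (a - dist z u)) (b - dist z v))"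
  have HL: "\<bar>H x - H y\<bar> \<le> dist x y" for x y
    unfolding H_def
    by (intro lip1_max lip1_min f1 lip1_pd lip1_md)
  have HE: "H x = f x" if x: "x \<in> E" for x
  proof -
    have 1: "f x \<le> a + dist x u" using a_ge[OF x] by simp
    have 2: "f x \<le> b + dist x v" using fy1[OF x] .
    have 3: "a - dist x u \<le> f x" using a_le[OF x] by simp
    have 4: "b - dist x v \<le> f x" using fy2[OF x] .
    show ?thesis unfolding H_def using 1 2 3 4 by (simp add: min_def max_def)
  qed
  have Hu: "H u = a"
  proof -
    have "b - dist u v \<le> a" using ba2 by simp
    moreover have "min (min (f u) (a + dist u u)) (b + dist u v) \<le> a" by simp
    ultimately show ?thesis unfolding H_def by (simp add: max_def)
  qed
  have Hv: "H v = b"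
  proof -
    have "a - dist u v \<le> b" using ba1 gd0 zero_le_dist[of u v] by linarith
    then have "a - dist v u \<le> b" by (simp add: dist_commute)
    moreover have "min (min (f v) (a + dist v u)) (b + dist v v) \<le> b" by simp
    ultimately show ?thesis unfolding H_def by (simp add: max_def)
  qed
  show ?thesis using HL HE Hu Hv ba1 by auto
qed

lemma dual_bound:
  assumes ld: "lip_dual p \<phi>" and dn: "dual_norm p \<phi> = 1" and f: "f \<in> Lip0 p"
  shows "\<bar>\<phi> f\<bar> \<le> lipnorm f"
proof -
  obtain K where K: "\<forall>f\<in>Lip0 p. \<bar>\<phi> f\<bar> \<le> K * lipnorm f" using ld unfolding lip_dual_def by blast
  have hom: "\<And>g c. g \<in> Lip0 p \<Longrightarrow> \<phi> (\<lambda>x. c * g x) = c * \<phi> g" using ld unfolding lip_dual_def by blast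
  have bdd: "bdd_above {\<bar>\<phi> g\<bar> | g. g \<in> LipBall p}"
  proof (rule bdd_aboveI)
    fix t assume "t \<in> {\<bar>\<phi> g\<bar> | g. g \<in> LipBall p}"
    then obtain g where g: "g \<in> LipBall p" "t = \<bar>\<phi> g\<bar>" by blast
    have g0: "g \<in> Lip0 p" using g(1) by (rule LipBall_Lip0)
    have Kg: "\<bar>\<phi> g\<bar> \<le> K * lipnorm g" using K g0 by blast
    have l0: "0 \<le> lipnorm g" using lipnorm_nonneg[OF Lip0_lipb[OF g0]] .
    have l1: "lipnorm g \<le> 1" using g(1) unfolding LipBall_def by blast
    have "K * lipnorm g \<le> max K 0"
    proof (cases "0 \<le> K")
      case True
      then have "K * lipnorm g \<le> K * 1" using l1 by (intro mult_left_mono) auto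
      then show ?thesis by simp
    next
      case False
      then have "K * lipnorm g \<le> 0" using l0 by (simp add: mult_nonpos_nonneg)
      then show ?thesis by simp
    qed
    then show "t \<le> max K 0" using g(2) Kg by simp
  qed
  have inball: "\<bar>\<phi> g\<bar> \<le> 1" if g: "g \<in> LipBall p" for g
  proof -
    have "\<bar>\<phi> g\<bar> \<le> Sup {\<bar>\<phi> g\<bar> | g. g \<in> LipBall p}"
      by (rule cSup_upper[OF _ bdd]) (use g in blast)
    then show ?thesis using dn unfolding dual_norm_def by simp
  qed
  have lf: "lipb f" by (rule Lip0_lipb[OF f])
  have fp: "f p = 0" using f unfolding Lip0_def by blast
  show ?thesis
  proof (cases "lipnorm f = 0")
    case True
    have "f x = 0" for x
    proof -
      have "\<bar>f x - f p\<bar> \<le> lipnorm f * dist x p" by (rule lipnorm_diff[OF lf])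
      then show ?thesis using True fp by simp
    qed
    then have "f = (\<lambda>x. 0 * f x)" by auto
    then have "\<phi> f = 0 * \<phi> f" using hom[OF f, of 0] by metis
    then show ?thesis using True by simp
  next
    case False
    define L where "L = lipnorm f"
    have L0: "0 < L" using False lipnorm_nonneg[OF lf] unfolding L_def by simp
    have gB: "(\<lambda>x. (1 / L) * f x) \<in> LipBall p"
    proof (rule LipBall_intro)
      fix x y
      have "\<bar>f x - f y\<bar> \<le> L * dist x y" unfolding L_def by (rule lipnorm_diff[OF lf])
      then have "\<bar>f x - f y\<bar> / L \<le> dist x y" using L0 by (simp add: divide_le_eq mult.commute)
      moreover have "\<bar>(1 / L) * f x - (1 / L) * f y\<bar> = \<bar>f x - f y\<bar> / L"
      proof -
        have "(1 / L) * f x - (1 / L) * f y = (f x - f y) / L" by (simp add: diff_divide_distrib)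
        then show ?thesis using L0 by (simp add: abs_divide)
      qed
      ultimately show "\<bar>(1 / L) * f x - (1 / L) * f y\<bar> \<le> dist x y" by simp
    next
      show "(1 / L) * f p = 0" using fp by simp
    qed
    have "\<bar>(1 / L) * \<phi> f\<bar> \<le> 1" using inball[OF gB] hom[OF f, of "1 / L"] by simp
    then have "\<bar>\<phi> f\<bar> / L \<le> 1" using L0 by (simp add: abs_mult)
    then show ?thesis using L0 unfolding L_def by (simp add: divide_le_eq)
  qed
qed

lemma lipnorm_le_supPhi:
  fixes f :: "'a::metric_space \<Rightarrow> real" and x0 y0 :: 'a
  assumes lf: "lipb f" and ne: "x0 \<noteq> y0"
  shows "lipnorm f \<le> Sup (Phi f ` Mtilde)"
proof -
  have bdd: "bdd_above (Phi f ` Mtilde)" using bdd_on_imp(2)[OF bdd_on_Phi[OF lf] order_refl] .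
  have up: "Phi f z \<le> Sup (Phi f ` Mtilde)" if "z \<in> Mtilde" for z
    by (rule cSup_upper[OF _ bdd]) (use that in blast)
  show ?thesis
    unfolding lipnorm_def
  proof (rule cSup_least)
    show "{\<bar>f x - f y\<bar> / dist x y |x y. x \<noteq> y} \<union> {0} \<noteq> {}" by simp
    fix t assume "t \<in> {\<bar>f x - f y\<bar> / dist x y |x y. x \<noteq> y} \<union> {0}"
    then consider "t = 0" | x y where "x \<noteq> y" "t = \<bar>f x - f y\<bar> / dist x y" by blast
    then show "t \<le> Sup (Phi f ` Mtilde)"
    proof cases
      case 1
      have "Phi f (x0, y0) + Phi f (y0, x0) = 0"
        by (simp add: Phi_def dist_commute divide_simps)
      moreover have "Phi f (x0, y0) \<le> Sup (Phi f ` Mtilde)" "Phi f (y0, x0) \<le> Sup (Phi f ` Mtilde)"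
        using up ne by auto
      ultimately show ?thesis using 1 by linarith
    next
      case 2
      show ?thesis
      proof (cases "0 \<le> f x - f y")
        case True
        then have "t = Phi f (x, y)" using 2 by (simp add: Phi_def)
        then show ?thesis using up 2 by simp
      next
        case False
        then have "t = Phi f (y, x)" using 2 by (simp add: Phi_def dist_commute)
        then show ?thesis using up 2 by simp
      qed
    qed
  qed
qed



lemma sup_S_add:
  fixes h k :: "'a \<times> 'a \<Rightarrow> real"
  assumes ne: "(Mtilde :: ('a \<times> 'a) set) \<noteq> {}" and h: "bdd_on h" and k: "bdd_on k"
  shows "Sup ((\<lambda>z. h z + k z) ` Mtilde) \<le> Sup (h ` Mtilde) + Sup (k ` Mtilde)"
proof (rule sup_le[OF ne])
  fix z :: "'a \<times> 'a" assume z: "z \<in> Mtilde"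
  show "h z + k z \<le> Sup (h ` Mtilde) + Sup (k ` Mtilde)"
    using sup_ge_pt[OF h order_refl z] sup_ge_pt[OF k order_refl z] by linarith
qed

lemma sup_S_scale:
  fixes h :: "'a \<times> 'a \<Rightarrow> real"
  assumes ne: "(Mtilde :: ('a \<times> 'a) set) \<noteq> {}" and h: "bdd_on h" and c: "0 < c"
  shows "Sup ((\<lambda>z. c * h z) ` Mtilde) = c * Sup (h ` Mtilde)"
proof (rule antisym)
  show "Sup ((\<lambda>z. c * h z) ` Mtilde) \<le> c * Sup (h ` Mtilde)"
  proof (rule sup_le[OF ne])
    fix z :: "'a \<times> 'a" assume z: "z \<in> Mtilde"
    show "c * h z \<le> c * Sup (h ` Mtilde)"
      using sup_ge_pt[OF h order_refl z] c by (simp add: mult_left_mono)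
  qed
  have "Sup (h ` Mtilde) \<le> Sup ((\<lambda>z. c * h z) ` Mtilde) / c"
  proof (rule sup_le[OF ne])
    fix z :: "'a \<times> 'a" assume z: "z \<in> Mtilde"
    have "c * h z \<le> Sup ((\<lambda>z. c * h z) ` Mtilde)"
      using sup_ge_pt[OF bdd_on_scale[OF h] order_refl z] by simp
    then show "h z \<le> Sup ((\<lambda>z. c * h z) ` Mtilde) / c" using c by (simp add: pos_le_divide_eq mult.commute)
  qed
  then show "c * Sup (h ` Mtilde) \<le> Sup ((\<lambda>z. c * h z) ` Mtilde)" using c by (simp add: pos_le_divide_eq mult.commute)
qed

lemma part_sum_ind:
  assumes P: "fin_partition P" and z: "z \<in> Mtilde"
  obtains C0 where "C0 \<in> P" "z \<in> C0" "(\<Sum>C\<in>P. a C * ind C z) = a C0"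
proof -
  have "\<Union>P = Mtilde" using P unfolding fin_partition_def by simp
  then obtain C0 where C0: "C0 \<in> P" "z \<in> C0" using z by blast
  have pw: "\<forall>C\<in>P. \<forall>C'\<in>P. C \<noteq> C' \<longrightarrow> C \<inter> C' = {}" using P unfolding fin_partition_def by blast
  have "(\<Sum>C\<in>P. a C * ind C z) = (\<Sum>C\<in>P. if C = C0 then a C else 0)"
  proof (rule sum.cong)
    fix C assume C: "C \<in> P"
    show "a C * ind C z = (if C = C0 then a C else 0)"
    proof (cases "C = C0")
      case True then show ?thesis using C0 by (simp add: ind_def)
    next
      case False
      then have "C \<inter> C0 = {}" using pw C C0(1) by blast
      then have "z \<notin> C" using C0(2) by blast
      then show ?thesis using False by (simp add: ind_def)
    qed
  qed simp
  also have "\<dots> = a C0" using C0(1) part_fin[OF P] by simp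
  finally show ?thesis using that C0 by blast
qed

lemma dir2:
  fixes p :: "'a::metric_space"
  assumes R: "\<forall>(\<mu> :: ('a \<times> 'a) set \<Rightarrow> real) (\<gamma> :: real).
       is_ba \<mu> \<and> optimal p \<mu> \<and> ba_norm \<mu> = 1 \<and> 0 < \<gamma> \<and> \<gamma> < 1 \<longrightarrow>
       (\<exists>A f g u v. A \<subseteq> Mtilde \<and> \<mu> A \<ge> \<gamma> \<and>
          f \<in> LipBall p \<and> g \<in> LipBall p \<and> u \<noteq> v \<and>
          (\<forall>(x, y) \<in> A. molec f x y \<ge> \<gamma> \<and> molec g x y \<ge> \<gamma>) \<and>
          (\<forall>x \<in> proj_pi A. \<forall>y \<in> proj_pi A.
              max (f x - f y) (g y - g x) + \<gamma> * dist u v \<le> dist x u + dist y v))"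
    and ld: "lip_dual p \<phi>" and dn: "dual_norm p \<phi> = 1" and a0: "0 < \<alpha>"
  shows "Sup {lipnorm (\<lambda>x. f x - g x) | f g. f \<in> slice p \<phi> \<alpha> \<and> g \<in> slice p \<phi> \<alpha>} = 2"
proof -
  have hom: "\<And>g c. g \<in> Lip0 p \<Longrightarrow> \<phi> (\<lambda>x. c * g x) = c * \<phi> g" using ld unfolding lip_dual_def by blast
  have addi: "\<And>f g. f \<in> Lip0 p \<Longrightarrow> g \<in> Lip0 p \<Longrightarrow> \<phi> (\<lambda>x. f x + g x) = \<phi> f + \<phi> g"
    using ld unfolding lip_dual_def by blast
  have z0: "(\<lambda>x. 0) \<in> Lip0 p" using LipBall_Lip0[OF zero_LipBall] .
  have phi0: "\<phi> (\<lambda>x. 0) = 0" using hom[OF z0, of 0] by simp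
  obtain x0 y0 :: 'a where xy0: "x0 \<noteq> y0"
  proof (rule ccontr)
    assume "\<not> thesis"
    then have all: "\<And>x y :: 'a. x = y" using that by blast
    have "{\<bar>\<phi> f\<bar> | f. f \<in> LipBall p} = {0}"
    proof (intro set_eqI iffI)
      fix t assume "t \<in> {\<bar>\<phi> f\<bar> | f. f \<in> LipBall p}"
      then obtain f where f: "f \<in> LipBall p" "t = \<bar>\<phi> f\<bar>" by blast
      have "f p = 0" using f(1) unfolding LipBall_def Lip0_def by blast
      then have "f = (\<lambda>x. 0)" using all by (metis)
      then show "t \<in> {0}" using f(2) phi0 by simp
    next
      fix t assume "t \<in> {0::real}"
      then show "t \<in> {\<bar>\<phi> f\<bar> | f. f \<in> LipBall p}" using zero_LipBall phi0 by force
    qed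
    then show False using dn unfolding dual_norm_def by simp
  qed
  have "(x0, y0) \<in> Mtilde" using xy0 by simp
  then have ne: "(Mtilde :: ('a \<times> 'a) set) \<noteq> {}" by blast
  interpret hb: hb_setup "{h :: 'a \<times> 'a \<Rightarrow> real. bdd_on h}" "\<lambda>h :: 'a \<times> 'a \<Rightarrow> real. Sup (h ` Mtilde)"
  proof
    fix h k :: "'a \<times> 'a \<Rightarrow> real" and c :: real
    show "h \<in> {h. bdd_on h} \<Longrightarrow> k \<in> {h. bdd_on h} \<Longrightarrow> (\<lambda>z. h z + k z) \<in> {h. bdd_on h}"
      using bdd_on_add by blast
    show "h \<in> {h. bdd_on h} \<Longrightarrow> (\<lambda>z. c * h z) \<in> {h. bdd_on h}"
      using bdd_on_scale by blast
    show "h \<in> {h. bdd_on h} \<Longrightarrow> k \<in> {h. bdd_on h} \<Longrightarrow>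
      Sup ((\<lambda>z. h z + k z) ` Mtilde) \<le> Sup (h ` Mtilde) + Sup (k ` Mtilde)"
      using sup_S_add[OF ne] by blast
    show "h \<in> {h. bdd_on h} \<Longrightarrow> 0 < c \<Longrightarrow> Sup ((\<lambda>z. c * h z) ` Mtilde) = c * Sup (h ` Mtilde)"
      using sup_S_scale[OF ne] by blast
  qed
  define G0 where "G0 = {(Phi f, \<phi> f) | f. f \<in> Lip0 p}"
  have G0lin: "lin_graph G0"
    unfolding lin_graph_def
  proof (intro conjI allI impI)
    fix h a k b assume h: "(h, a) \<in> G0" and k: "(k, b) \<in> G0"
    obtain f where f: "h = Phi f" "a = \<phi> f" "f \<in> Lip0 p" using h unfolding G0_def by blast
    obtain g where g: "k = Phi g" "b = \<phi> g" "g \<in> Lip0 p" using k unfolding G0_def by blast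
    have "(Phi (\<lambda>x. f x + g x), \<phi> (\<lambda>x. f x + g x)) \<in> G0"
      unfolding G0_def using Lip0_add[OF f(3) g(3)] by blast
    then show "((\<lambda>z. h z + k z), a + b) \<in> G0"
      using f g addi[OF f(3) g(3)] by (simp add: Phi_add)
  next
    fix h a c assume h: "(h, a) \<in> G0"
    obtain f where f: "h = Phi f" "a = \<phi> f" "f \<in> Lip0 p" using h unfolding G0_def by blast
    have "(Phi (\<lambda>x. c * f x), \<phi> (\<lambda>x. c * f x)) \<in> G0"
      unfolding G0_def using Lip0_scale[OF f(3)] by blast
    then show "((\<lambda>z. c * h z), c * a) \<in> G0"
      using f hom[OF f(3)] by (simp add: Phi_scale)
  qed
  have G0func: "func_graph G0"
    unfolding func_graph_def
  proof (intro allI impI)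
    fix h a b assume h: "(h, a) \<in> G0" and k: "(h, b) \<in> G0"
    obtain f where f: "h = Phi f" "a = \<phi> f" "f \<in> Lip0 p" using h unfolding G0_def by blast
    obtain g where g: "h = Phi g" "b = \<phi> g" "g \<in> Lip0 p" using k unfolding G0_def by blast
    have "f = g" by (rule Phi_inj[of f p g]) (use f g in \<open>auto simp: Lip0_def\<close>)
    then show "a = b" using f g by simp
  qed
  have G0ne: "G0 \<noteq> {}" unfolding G0_def using z0 by blast
  have G0dom: "fst ` G0 \<subseteq> {h. bdd_on h}"
    unfolding G0_def using bdd_on_Phi Lip0_lipb by force
  have G0q: "a \<le> Sup (h ` Mtilde)" if hG: "(h, a) \<in> G0" for h a
  proof -
    obtain f where f: "h = Phi f" "a = \<phi> f" "f \<in> Lip0 p" using hG unfolding G0_def by blast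
    have "\<phi> f \<le> \<bar>\<phi> f\<bar>" by simp
    also have "\<dots> \<le> lipnorm f" by (rule dual_bound[OF ld dn f(3)])
    also have "\<dots> \<le> Sup (Phi f ` Mtilde)" by (rule lipnorm_le_supPhi[OF Lip0_lipb[OF f(3)] xy0])
    finally show ?thesis using f by simp
  qed
  obtain \<psi> :: "('a \<times> 'a \<Rightarrow> real) \<Rightarrow> real" where psi_add: "\<forall>h\<in>{h. bdd_on h}. \<forall>k\<in>{h. bdd_on h}. \<psi> (\<lambda>z. h z + k z) = \<psi> h + \<psi> k"
    and psi_sc: "\<forall>h\<in>{h. bdd_on h}. \<forall>c. \<psi> (\<lambda>z. c * h z) = c * \<psi> h"
    and psi_q: "\<forall>h\<in>{h. bdd_on h}. \<psi> h \<le> Sup (h ` Mtilde)"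
    and psi_G0: "\<forall>h a. (h, a) \<in> G0 \<longrightarrow> \<psi> h = a"
    using hb.HB[OF G0lin G0func G0ne G0dom G0q] by blast
  have psa: "\<psi> (\<lambda>z. h z + k z) = \<psi> h + \<psi> k" if "bdd_on h" "bdd_on k" for h k
    using psi_add that by blast
  have pss: "\<psi> (\<lambda>z. c * h z) = c * \<psi> h" if "bdd_on h" for h c
    using psi_sc that by blast
  have psq: "\<psi> h \<le> Sup (h ` Mtilde)" if "bdd_on h" for h
    using psi_q that by blast
  have psiPhi: "\<psi> (Phi f) = \<phi> f" if f0: "f \<in> Lip0 p" for f
    using psi_G0 f0 unfolding G0_def by blast
  have psi_zero: "\<psi> (\<lambda>z. 0) = 0"
  proof -
    have "bdd_on (\<lambda>z::'a \<times> 'a. 0)" unfolding bdd_on_def by auto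
    from pss[OF this, of 0] show ?thesis by simp
  qed
  have psi_nonpos: "\<psi> h \<le> 0" if hb: "bdd_on h" and hn: "\<And>z. z \<in> Mtilde \<Longrightarrow> h z \<le> 0" for h
  proof -
    have "\<psi> h \<le> Sup (h ` Mtilde)" using psq[OF hb] .
    also have "\<dots> \<le> 0" by (rule sup_le[OF ne]) (use hn in blast)
    finally show ?thesis .
  qed
  have psi_mono: "\<psi> h \<le> \<psi> k" if hb: "bdd_on h" and kb: "bdd_on k" and hk: "\<And>z. z \<in> Mtilde \<Longrightarrow> h z \<le> k z" for h k
  proof -
    have b2: "bdd_on (\<lambda>z. -1 * k z)" by (rule bdd_on_scale[OF kb])
    have "\<psi> (\<lambda>z. h z + -1 * k z) = \<psi> h + \<psi> (\<lambda>z. -1 * k z)" using psa[OF hb b2] .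
    also have "\<psi> (\<lambda>z. -1 * k z) = -1 * \<psi> k" using pss[OF kb] .
    finally have eq: "\<psi> (\<lambda>z. h z + -1 * k z) = \<psi> h - \<psi> k" by simp
    have "\<psi> (\<lambda>z. h z + -1 * k z) \<le> 0"
      by (rule psi_nonpos) (use bdd_on_add[OF hb b2] hk in auto)
    then show ?thesis using eq by simp
  qed
  define \<mu> where "\<mu> = (\<lambda>A. \<psi> (ind A))"
  have mu_nonneg: "0 \<le> \<mu> A" for A
  proof -
    have b0: "bdd_on (\<lambda>z::'a \<times> 'a. 0)" unfolding bdd_on_def by auto
    have "\<psi> (\<lambda>z. 0) \<le> \<psi> (ind A)"
      by (rule psi_mono[OF b0 bdd_on_ind]) (simp add: ind_def)
    then show ?thesis unfolding \<mu>_def using psi_zero by simp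
  qed
  have mu_S: "\<mu> Mtilde = 1"
  proof -
    have "\<psi> (ind Mtilde) \<le> Sup (ind (Mtilde::('a \<times> 'a) set) ` Mtilde)" by (rule psq) (rule bdd_on_ind)
    also have "\<dots> \<le> 1" by (rule sup_le[OF ne]) (simp add: ind_def)
    finally have 1: "\<psi> (ind Mtilde) \<le> 1" .
    have "\<psi> (\<lambda>z. -1 * ind Mtilde z) \<le> Sup ((\<lambda>z. -1 * ind (Mtilde::('a \<times> 'a) set) z) ` Mtilde)"
      by (rule psq) (rule bdd_on_scale[OF bdd_on_ind])
    also have "\<dots> \<le> -1" by (rule sup_le[OF ne]) (simp add: ind_def)
    finally have "\<psi> (\<lambda>z. -1 * ind Mtilde z) \<le> -1" .
    moreover have "\<psi> (\<lambda>z. -1 * ind Mtilde z) = -1 * \<psi> (ind Mtilde)" by (rule pss) (rule bdd_on_ind)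
    ultimately show ?thesis unfolding \<mu>_def using 1 by simp
  qed
  have mu_le1: "\<mu> A \<le> 1" for A
  proof -
    have "\<psi> (ind A) \<le> \<psi> (ind Mtilde)" by (rule psi_mono[OF bdd_on_ind bdd_on_ind]) (simp add: ind_def)
    then show ?thesis using mu_S unfolding \<mu>_def by simp
  qed
  have pb: "pba \<mu>"
    unfolding pba_def is_ba_def ba_positive_def
  proof (intro conjI allI impI)
    fix A B :: "('a \<times> 'a) set" assume "A \<subseteq> Mtilde \<and> B \<subseteq> Mtilde \<and> A \<inter> B = {}"
    then have d: "A \<inter> B = {}" by blast
    have "ind (A \<union> B) = (\<lambda>z. ind A z + ind B z)"
    proof (rule ext)
      fix z show "ind (A \<union> B) z = ind A z + ind B z" using d by (auto simp: ind_def)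
    qed
    then show "\<mu> (A \<union> B) = \<mu> A + \<mu> B" unfolding \<mu>_def using psa[OF bdd_on_ind bdd_on_ind] by simp
  next
    show "\<exists>K. \<forall>A. A \<subseteq> Mtilde \<longrightarrow> \<bar>\<mu> A\<bar> \<le> K"
      using mu_nonneg mu_le1 by (intro exI[of _ 1]) auto
  next
    fix A :: "('a \<times> 'a) set" show "0 \<le> \<mu> A" by (rule mu_nonneg)
  qed
  have bsum: "bdd_on (\<lambda>z. \<Sum>C\<in>P. F C z)" if "finite P" "\<And>C. C \<in> P \<Longrightarrow> bdd_on (F C)"
    for P :: "('a \<times> 'a) set set" and F :: "('a \<times> 'a) set \<Rightarrow> 'a \<times> 'a \<Rightarrow> real"
    using that
  proof (induction P rule: finite_induct)
    case empty then show ?case unfolding bdd_on_def by (intro exI[of _ 0]) simp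
  next
    case (insert C P)
    have "bdd_on (\<lambda>z. F C z + (\<Sum>C\<in>P. F C z))" by (rule bdd_on_add) (use insert in auto)
    then show ?case using insert by simp
  qed
  have psum: "\<psi> (\<lambda>z. \<Sum>C\<in>P. F C z) = (\<Sum>C\<in>P. \<psi> (F C))"
    if "finite P" "\<And>C. C \<in> P \<Longrightarrow> bdd_on (F C)"
    for P :: "('a \<times> 'a) set set" and F :: "('a \<times> 'a) set \<Rightarrow> 'a \<times> 'a \<Rightarrow> real"
    using that
  proof (induction P rule: finite_induct)
    case empty then show ?case using psi_zero by simp
  next
    case (insert C P)
    have b1: "bdd_on (F C)" using insert by auto
    have b2: "bdd_on (\<lambda>z. \<Sum>C\<in>P. F C z)" by (rule bsum) (use insert in auto)
    have "\<psi> (\<lambda>z. F C z + (\<Sum>C\<in>P. F C z)) = \<psi> (F C) + \<psi> (\<lambda>z. \<Sum>C\<in>P. F C z)"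
      using psa[OF b1 b2] .
    then show ?case using insert by simp
  qed
  have Lsum_psi: "Lsum \<mu> h P = \<psi> (\<lambda>z. \<Sum>C\<in>P. Inf (h ` C) * ind C z)"
    and Usum_psi: "Usum \<mu> h P = \<psi> (\<lambda>z. \<Sum>C\<in>P. Sup (h ` C) * ind C z)"
    if P: "fin_partition P" for P and h :: "'a \<times> 'a \<Rightarrow> real"
  proof -
    have "\<psi> (\<lambda>z. \<Sum>C\<in>P. Inf (h ` C) * ind C z) = (\<Sum>C\<in>P. \<psi> (\<lambda>z. Inf (h ` C) * ind C z))"
      by (rule psum) (use part_fin[OF P] bdd_on_scale[OF bdd_on_ind] in auto)
    also have "\<dots> = (\<Sum>C\<in>P. Inf (h ` C) * \<mu> C)"
      unfolding \<mu>_def using pss[OF bdd_on_ind] by simp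
    finally show "Lsum \<mu> h P = \<psi> (\<lambda>z. \<Sum>C\<in>P. Inf (h ` C) * ind C z)" unfolding Lsum_def by simp
    have "\<psi> (\<lambda>z. \<Sum>C\<in>P. Sup (h ` C) * ind C z) = (\<Sum>C\<in>P. \<psi> (\<lambda>z. Sup (h ` C) * ind C z))"
      by (rule psum) (use part_fin[OF P] bdd_on_scale[OF bdd_on_ind] in auto)
    also have "\<dots> = (\<Sum>C\<in>P. Sup (h ` C) * \<mu> C)"
      unfolding \<mu>_def using pss[OF bdd_on_ind] by simp
    finally show "Usum \<mu> h P = \<psi> (\<lambda>z. \<Sum>C\<in>P. Sup (h ` C) * ind C z)" unfolding Usum_def by simp
  qed
  have L_le: "Lsum \<mu> h P \<le> \<psi> h" if P: "fin_partition P" and hb: "bdd_on h" for P and h :: "'a \<times> 'a \<Rightarrow> real"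
  proof -
    have "\<psi> (\<lambda>z. \<Sum>C\<in>P. Inf (h ` C) * ind C z) \<le> \<psi> h"
    proof (rule psi_mono[OF _ hb])
      show "bdd_on (\<lambda>z. \<Sum>C\<in>P. Inf (h ` C) * ind C z)"
        by (rule bsum) (use part_fin[OF P] bdd_on_scale[OF bdd_on_ind] in auto)
      fix z :: "'a \<times> 'a" assume z: "z \<in> Mtilde"
      obtain C0 where C0: "C0 \<in> P" "z \<in> C0" "(\<Sum>C\<in>P. Inf (h ` C) * ind C z) = Inf (h ` C0)"
        using part_sum_ind[OF P z, where a = "\<lambda>C. Inf (h ` C)"] by blast
      show "(\<Sum>C\<in>P. Inf (h ` C) * ind C z) \<le> h z"
        using C0 inf_le_pt[OF hb part_sub[OF P C0(1)] C0(2)] by simp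
    qed
    then show ?thesis using Lsum_psi[OF P] by simp
  qed
  have U_ge: "\<psi> h \<le> Usum \<mu> h P" if P: "fin_partition P" and hb: "bdd_on h" for P and h :: "'a \<times> 'a \<Rightarrow> real"
  proof -
    have "\<psi> h \<le> \<psi> (\<lambda>z. \<Sum>C\<in>P. Sup (h ` C) * ind C z)"
    proof (rule psi_mono[OF hb])
      show "bdd_on (\<lambda>z. \<Sum>C\<in>P. Sup (h ` C) * ind C z)"
        by (rule bsum) (use part_fin[OF P] bdd_on_scale[OF bdd_on_ind] in auto)
      fix z :: "'a \<times> 'a" assume z: "z \<in> Mtilde"
      obtain C0 where C0: "C0 \<in> P" "z \<in> C0" "(\<Sum>C\<in>P. Sup (h ` C) * ind C z) = Sup (h ` C0)"
        using part_sum_ind[OF P z, where a = "\<lambda>C. Sup (h ` C)"] by blast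
      show "h z \<le> (\<Sum>C\<in>P. Sup (h ` C) * ind C z)"
        using C0 sup_ge_pt[OF hb part_sub[OF P C0(1)] C0(2)] by simp
    qed
    then show ?thesis using Usum_psi[OF P] by simp
  qed
  have I_psi: "ba_integral \<mu> h = \<psi> h" if hb: "bdd_on h" for h :: "'a \<times> 'a \<Rightarrow> real"
  proof (rule eq_by_eps[of 1])
    fix e :: real assume e: "0 < e"
    obtain Q where Q: "fin_partition Q" "Usum \<mu> h Q - Lsum \<mu> h Q \<le> e"
      using level[OF pb hb hb e] by blast
    have "Lsum \<mu> h Q \<le> ba_integral \<mu> h" by (rule I_lower[OF pb Q(1) hb])
    moreover have "\<psi> h \<le> Usum \<mu> h Q" by (rule U_ge[OF Q(1) hb])
    moreover have "ba_integral \<mu> h \<le> \<psi> h"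
      unfolding ba_integral_Lsum
      by (rule cSup_least) (use P0_part L_le hb in auto)
    ultimately show "\<bar>ba_integral \<mu> h - \<psi> h\<bar> \<le> 1 * e" using Q(2) by simp
  qed simp
  have I_phi: "ba_integral \<mu> (Phi f) = \<phi> f" if "f \<in> Lip0 p" for f
    using I_psi[OF bdd_on_Phi[OF Lip0_lipb[OF that]]] psiPhi[OF that] by simp
  have bn: "ba_norm \<mu> = 1" using ba_norm_pba[OF pb] mu_S by simp
  have opt: "optimal p \<mu>"
  proof -
    have "{\<bar>ba_integral \<mu> (Phi f)\<bar> | f. f \<in> LipBall p} = {\<bar>\<phi> f\<bar> | f. f \<in> LipBall p}"
    proof (intro set_eqI iffI)
      fix t assume "t \<in> {\<bar>ba_integral \<mu> (Phi f)\<bar> | f. f \<in> LipBall p}"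
      then obtain f where f: "f \<in> LipBall p" "t = \<bar>ba_integral \<mu> (Phi f)\<bar>" by blast
      then have "t = \<bar>\<phi> f\<bar>" using I_phi[OF LipBall_Lip0[OF f(1)]] by simp
      then show "t \<in> {\<bar>\<phi> f\<bar> | f. f \<in> LipBall p}" using f(1) by blast
    next
      fix t assume "t \<in> {\<bar>\<phi> f\<bar> | f. f \<in> LipBall p}"
      then obtain f where f: "f \<in> LipBall p" "t = \<bar>\<phi> f\<bar>" by blast
      then have "t = \<bar>ba_integral \<mu> (Phi f)\<bar>" using I_phi[OF LipBall_Lip0[OF f(1)]] by simp
      then show "t \<in> {\<bar>ba_integral \<mu> (Phi f)\<bar> | f. f \<in> LipBall p}" using f(1) by blast
    qed
    then have "Phi_star_norm p \<mu> = dual_norm p \<phi>" unfolding Phi_star_norm_def dual_norm_def by simp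
    then show ?thesis unfolding optimal_def using pb dn bn unfolding pba_def by simp
  qed
  have isba: "is_ba \<mu>" using pb unfolding pba_def by blast
  define T where "T = {lipnorm (\<lambda>x. f x - g x) | f g. f \<in> slice p \<phi> \<alpha> \<and> g \<in> slice p \<phi> \<alpha>}"
  have T2: "t \<le> 2" if "t \<in> T" for t
  proof -
    obtain f g where fg: "f \<in> LipBall p" "g \<in> LipBall p" "t = lipnorm (\<lambda>x. f x - g x)"
      using \<open>t \<in> T\<close> unfolding T_def slice_def by blast
    have "lipnorm (\<lambda>x. f x - g x) \<le> 2"
    proof (rule lipnorm_le)
      fix x y
      show "\<bar>(f x - g x) - (f y - g y)\<bar> \<le> 2 * dist x y"
        using LipBall_diff[OF fg(1), of x y] LipBall_diff[OF fg(2), of x y] by (simp add: abs_le_iff)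
    qed simp
    then show ?thesis using fg by simp
  qed
  have big: "\<exists>t\<in>T. 2 - \<epsilon> < t" if e: "0 < \<epsilon>" for \<epsilon>
  proof -
    define \<delta> where "\<delta> = min (1 / 2) (min (\<alpha> / 3) (\<epsilon> / 4))"
    define \<gamma> where "\<gamma> = 1 - \<delta>"
    have d0: "0 < \<delta>" unfolding \<delta>_def using a0 e by simp
    have d1: "\<delta> \<le> 1 / 2" "\<delta> \<le> \<alpha> / 3" "\<delta> \<le> \<epsilon> / 4" unfolding \<delta>_def by auto
    have g0: "0 < \<gamma>" and g1: "\<gamma> < 1" unfolding \<gamma>_def using d0 d1 by auto
    have hyp: "is_ba \<mu> \<and> optimal p \<mu> \<and> ba_norm \<mu> = 1 \<and> 0 < \<gamma> \<and> \<gamma> < 1"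
      using isba opt bn g0 g1 by simp
    note ex = R[rule_format, OF hyp]
    obtain A f g u v where A: "A \<subseteq> Mtilde" "\<mu> A \<ge> \<gamma>" and fB: "f \<in> LipBall p" and gB: "g \<in> LipBall p"
      and uv: "u \<noteq> v" and molA: "\<forall>(x, y) \<in> A. molec f x y \<ge> \<gamma> \<and> molec g x y \<ge> \<gamma>"
      and cnd: "\<forall>x \<in> proj_pi A. \<forall>y \<in> proj_pi A. max (f x - f y) (g y - g x) + \<gamma> * dist u v \<le> dist x u + dist y v"
      using ex by blast
    have Ane: "A \<noteq> {}"
    proof
      assume "A = {}"
      then have "\<mu> A = \<psi> (\<lambda>z. 0)" unfolding \<mu>_def ind_def by simp
      then show False using psi_zero A(2) g0 by simp
    qed
    have Ene: "proj_pi A \<noteq> {}" using Ane unfolding proj_pi_def by fast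
    have condf: "f x - f y + \<gamma> * dist u v \<le> dist x u + dist y v" if "x \<in> proj_pi A" "y \<in> proj_pi A" for x y
      using cnd that by fastforce
    have condg: "g x - g y + \<gamma> * dist v u \<le> dist x v + dist y u" if "x \<in> proj_pi A" "y \<in> proj_pi A" for x y
    proof -
      have "max (f y - f x) (g x - g y) + \<gamma> * dist u v \<le> dist y u + dist x v" using cnd that by blast
      then show ?thesis by (simp add: dist_commute)
    qed
    obtain H where H: "\<forall>x y. \<bar>H x - H y\<bar> \<le> dist x y" "\<forall>x\<in>proj_pi A. H x = f x" "\<gamma> * dist u v \<le> H v - H u"
      using ext_lemma[OF LipBall_diff[OF fB] Ene condf] g0 g1 by auto
    obtain K where K: "\<forall>x y. \<bar>K x - K y\<bar> \<le> dist x y" "\<forall>x\<in>proj_pi A. K x = g x" "\<gamma> * dist v u \<le> K u - K v"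
      using ext_lemma[OF LipBall_diff[OF gB] Ene condg] g0 g1 by auto
    define H' where "H' = (\<lambda>x. H x - H p)"
    define K' where "K' = (\<lambda>x. K x - K p)"
    have H'B: "H' \<in> LipBall p" unfolding H'_def by (rule LipBall_intro) (use H(1) in auto)
    have K'B: "K' \<in> LipBall p" unfolding K'_def by (rule LipBall_intro) (use K(1) in auto)
    have slice_mem: "F \<in> slice p \<phi> \<alpha>"
      if FB: "F \<in> LipBall p" and FA: "\<And>x y. (x, y) \<in> A \<Longrightarrow> \<gamma> \<le> Phi F (x, y)" for F
    proof -
      have F0: "F \<in> Lip0 p" by (rule LipBall_Lip0[OF FB])
      have lF: "lipb F" by (rule Lip0_lipb[OF F0])
      have ln: "lipnorm F \<le> 1" using FB unfolding LipBall_def by blast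
      have "\<gamma> * \<mu> A + (-1) * \<mu> (Mtilde - A) \<le> ba_integral \<mu> (Phi F)"
      proof (rule I_ge2[OF pb A(1) bdd_on_Phi[OF lF]])
        fix z assume "z \<in> A"
        then show "\<gamma> \<le> Phi F z" using FA by (cases z) auto
      next
        fix z assume "z \<in> Mtilde - A"
        show "-1 \<le> Phi F z" using Phi_bound[OF lF, of z] ln by (simp add: abs_le_iff)
      qed
      moreover have "\<mu> (Mtilde - A) = 1 - \<mu> A" using pba_diff[OF pb A(1)] mu_S by simp
      ultimately have "(1 + \<gamma>) * \<mu> A - 1 \<le> \<phi> F" using I_phi[OF F0] by (simp add: algebra_simps)
      moreover have "(1 + \<gamma>) * \<gamma> \<le> (1 + \<gamma>) * \<mu> A" using A(2) g0 by (simp add: mult_left_mono)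
      moreover have "(1 + \<gamma>) * \<gamma> - 1 = 1 - 3 * \<delta> + \<delta> * \<delta>" unfolding \<gamma>_def by (simp add: algebra_simps)
      moreover have "0 < \<delta> * \<delta>" using d0 by simp
      ultimately have "1 - \<alpha> < \<phi> F" using d1 by linarith
      then show ?thesis unfolding slice_def using FB by simp
    qed
    have HA: "\<gamma> \<le> Phi H' (x, y)" if "(x, y) \<in> A" for x y
    proof -
      have "x \<in> proj_pi A" "y \<in> proj_pi A" unfolding proj_pi_def using that by blast+
      then have "Phi H' (x, y) = molec f x y" using H(2) by (simp add: H'_def Phi_def molec_def)
      then show ?thesis using molA that by auto
    qed
    have KA: "\<gamma> \<le> Phi K' (x, y)" if "(x, y) \<in> A" for x y
    proof -
      have "x \<in> proj_pi A" "y \<in> proj_pi A" unfolding proj_pi_def using that by blast+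
      then have "Phi K' (x, y) = molec g x y" using K(2) by (simp add: K'_def Phi_def molec_def)
      then show ?thesis using molA that by auto
    qed
    have Hs: "H' \<in> slice p \<phi> \<alpha>" by (rule slice_mem[OF H'B HA])
    have Ks: "K' \<in> slice p \<phi> \<alpha>" by (rule slice_mem[OF K'B KA])
    have lHK: "lipb (\<lambda>x. H' x - K' x)"
      unfolding lipb_def
    proof (intro exI[of _ 2] allI)
      fix x y
      show "\<bar>(H' x - K' x) - (H' y - K' y)\<bar> \<le> 2 * dist x y"
        using LipBall_diff[OF H'B, of x y] LipBall_diff[OF K'B, of x y] by (simp add: abs_le_iff)
    qed
    have duv: "0 < dist v u" using uv by simp
    have r1: "\<bar>(H' v - K' v) - (H' u - K' u)\<bar> / dist v u \<le> lipnorm (\<lambda>x. H' x - K' x)"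
      using lipnorm_ratio[OF lHK, of v u] uv by simp
    have "2 * \<gamma> * dist v u \<le> \<bar>(H' v - K' v) - (H' u - K' u)\<bar>"
      using H(3) K(3) unfolding H'_def K'_def by (simp add: dist_commute abs_le_iff)
    then have "2 * \<gamma> \<le> \<bar>(H' v - K' v) - (H' u - K' u)\<bar> / dist v u"
      using duv by (simp add: pos_le_divide_eq)
    then have "2 * \<gamma> \<le> lipnorm (\<lambda>x. H' x - K' x)" using r1 by linarith
    moreover have "2 - \<epsilon> < 2 * \<gamma>"
    proof -
      have "2 * \<gamma> = 2 - 2 * \<delta>" unfolding \<gamma>_def by simp
      then show ?thesis using d1 e by linarith
    qed
    moreover have "lipnorm (\<lambda>x. H' x - K' x) \<in> T" unfolding T_def using Hs Ks by blast
    ultimately have "lipnorm (\<lambda>x. H' x - K' x) \<in> T \<and> 2 - \<epsilon> < lipnorm (\<lambda>x. H' x - K' x)"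
      by linarith
    then show ?thesis by blast
  qed
  have Tne: "T \<noteq> {}" using big[of 1] by auto
  have Tbdd: "bdd_above T" using T2 by (meson bdd_above_def)
  have "Sup T = 2"
  proof (rule antisym)
    show "Sup T \<le> 2" by (rule cSup_least[OF Tne]) (use T2 in blast)
    show "2 \<le> Sup T"
    proof (rule ccontr)
      assume "\<not> 2 \<le> Sup T"
      then have "0 < 2 - Sup T" by simp
      then obtain t where t: "t \<in> T" "2 - (2 - Sup T) < t" using big by blast
      have "t \<le> Sup T" by (rule cSup_upper[OF t(1) Tbdd])
      then show False using t(2) by simp
    qed
  qed
  then show ?thesis unfolding T_def .
qed

theorem proposition3p4:
  fixes p :: "'a::metric_space"
  shows "LD2P p \<longleftrightarrow>
    (\<forall>(\<mu> :: ('a \<times> 'a) set \<Rightarrow> real) (\<gamma> :: real).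
       is_ba \<mu> \<and> optimal p \<mu> \<and> ba_norm \<mu> = 1 \<and> 0 < \<gamma> \<and> \<gamma> < 1 \<longrightarrow>
       (\<exists>A f g u v. A \<subseteq> Mtilde \<and> \<mu> A \<ge> \<gamma> \<and>
          f \<in> LipBall p \<and> g \<in> LipBall p \<and> u \<noteq> v \<and>
          (\<forall>(x, y) \<in> A. molec f x y \<ge> \<gamma> \<and> molec g x y \<ge> \<gamma>) \<and>
          (\<forall>x \<in> proj_pi A. \<forall>y \<in> proj_pi A.
              max (f x - f y) (g y - g x) + \<gamma> * dist u v \<le> dist x u + dist y v)))"
proof
  assume L: "LD2P p"
  show "\<forall>(\<mu> :: ('a \<times> 'a) set \<Rightarrow> real) (\<gamma> :: real).
       is_ba \<mu> \<and> optimal p \<mu> \<and> ba_norm \<mu> = 1 \<and> 0 < \<gamma> \<and> \<gamma> < 1 \<longrightarrow>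
       (\<exists>A f g u v. A \<subseteq> Mtilde \<and> \<mu> A \<ge> \<gamma> \<and>
          f \<in> LipBall p \<and> g \<in> LipBall p \<and> u \<noteq> v \<and>
          (\<forall>(x, y) \<in> A. molec f x y \<ge> \<gamma> \<and> molec g x y \<ge> \<gamma>) \<and>
          (\<forall>x \<in> proj_pi A. \<forall>y \<in> proj_pi A.
              max (f x - f y) (g y - g x) + \<gamma> * dist u v \<le> dist x u + dist y v))"
  proof (intro allI impI)
    fix \<mu> :: "('a \<times> 'a) set \<Rightarrow> real" and \<gamma> :: real
    assume h: "is_ba \<mu> \<and> optimal p \<mu> \<and> ba_norm \<mu> = 1 \<and> 0 < \<gamma> \<and> \<gamma> < 1"
    show "\<exists>A f g u v. A \<subseteq> Mtilde \<and> \<mu> A \<ge> \<gamma> \<and>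
          f \<in> LipBall p \<and> g \<in> LipBall p \<and> u \<noteq> v \<and>
          (\<forall>(x, y) \<in> A. molec f x y \<ge> \<gamma> \<and> molec g x y \<ge> \<gamma>) \<and>
          (\<forall>x \<in> proj_pi A. \<forall>y \<in> proj_pi A.
              max (f x - f y) (g y - g x) + \<gamma> * dist u v \<le> dist x u + dist y v)"
      by (rule dir1[OF L]) (use h in auto)
  qed
next
  assume R: "\<forall>(\<mu> :: ('a \<times> 'a) set \<Rightarrow> real) (\<gamma> :: real).
       is_ba \<mu> \<and> optimal p \<mu> \<and> ba_norm \<mu> = 1 \<and> 0 < \<gamma> \<and> \<gamma> < 1 \<longrightarrow>
       (\<exists>A f g u v. A \<subseteq> Mtilde \<and> \<mu> A \<ge> \<gamma> \<and>
          f \<in> LipBall p \<and> g \<in> LipBall p \<and> u \<noteq> v \<and>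
          (\<forall>(x, y) \<in> A. molec f x y \<ge> \<gamma> \<and> molec g x y \<ge> \<gamma>) \<and>
          (\<forall>x \<in> proj_pi A. \<forall>y \<in> proj_pi A.
              max (f x - f y) (g y - g x) + \<gamma> * dist u v \<le> dist x u + dist y v))"
  show "LD2P p"
    unfolding LD2P_def
  proof (intro allI impI)
    fix \<phi> :: "('a \<Rightarrow> real) \<Rightarrow> real" and \<alpha> :: real
    assume h: "lip_dual p \<phi> \<and> dual_norm p \<phi> = 1 \<and> \<alpha> > 0"
    show "Sup {lipnorm (\<lambda>x. f x - g x) | f g. f \<in> slice p \<phi> \<alpha> \<and> g \<in> slice p \<phi> \<alpha>} = 2"
      using dir2[OF R] h by blast
  qed
qed


end
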